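(* Let $p$ be a prime, $q=p^l$, $m\ge1$, $n=2m$. For any $r$ with $0\leqslant r<n(q-1)$ and any $I\subseteq M_r$, with $\overline{I}=M_r\setminus I$, \begin{align*} \dim(\mathcal{C}_q(r,I,n))&=\sum_{i=0}^n(-1)^i\binom{n}{i}\binom{n+r-iq}{r-iq}\\ &\quad-2\sum_{k\in\overline{I},\,k\neq0}\left(\sum_{i=0}^{m}(-1)^i\binom{m}{i}\binom{\frac{n(q-1)-r-k}{2}-iq+m-1}{\frac{n(q-1)-r-k}{2}-iq}\right)\left(\sum_{i=0}^{m}(-1)^i\binom{m}{i}\binom{\frac{n(q-1)-r+k}{2}-iq+m-1}{\frac{n(q-1)-r+k}{2}-iq}\right)\\ &\quad-\mathbf{1}_{\overline{I}}(0)\left(\sum_{i=0}^{m}(-1)^i\binom{m}{i}\binom{\frac{n(q-1)-r}{2}-iq+m-1}{\frac{n(q-1)-r}{2}-iq}\right)^2, \end{align*} where $\mathbf{1}_{\overline{I}}(0)=1$ if $0\in\overline{I}$ and $0$ otherwise.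
   Context: Let $N=q^n-1$ and $\alpha$ a primitive element of $\mathbb{F}_{q^n}$. Every integer $0\le u\le q^n-1$ is written $u=\sum_{i=0}^{n-1}u_iq^i$, $u_i\in\{0,\dots,q-1\}$; $\mathrm{wt}_q(u)=\sum u_i$, $O(u)=\sum_{i\text{ odd}}u_i$, $E(u)=\sum_{i\text{ even}}u_i$. For $-1\le r<n(q-1)$, $Z_r=\{\alpha^u\mid 0<u\le q^n-1,\ \mathrm{wt}_q(u)\le n(q-1)-r-1\}$. For $0\le r\le n(q-1)$ and integer $k\ge0$, $\Theta^{(r)}_k=\{\alpha^u\mid 0\le u\le q^n-1,\ \mathrm{wt}_q(u)=n(q-1)-r,\ |O(u)-E(u)|=k\}$. $M_r$ is the set of even (resp. odd) integers $k\in[0,m(q-1)]$ when $r$ is even (resp. odd). For $I\subseteq M_r$, $\overline I=M_r\setminus I$ and $Z_{r,I}=Z_r\cup\bigcup_{k\in\overline I}\Theta^{(r)}_k$. A cyclic code of length $N$ over $\mathbb{F}_q$ with zero set $Z\subseteq\mathbb{F}_{q^n}^*$ is $\{(c_0,\dots,c_{N-1})\in\mathbb{F}_q^N\mid \sum_{i=0}^{N-1}c_i\beta^i=0\ \forall\beta\in Z\}$. $\mathcal{C}_q(r,I,n)^*$ is the cyclic code with zero set $Z_{r,I}$, and $\mathcal{C}_q(r,I,n)\subseteq\mathbb{F}_q^{q^n}$ is its extended code, obtained by appending to each codeword $c$ the coordinate $-\sum_{i}c_i$. Binomial coefficients $\binom ab$ with $b<0$ are $0$. *)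

theory Defs
  imports Complex_Main "HOL-Computational_Algebra.Primes"
begin

definition digit :: "nat \<Rightarrow> nat \<Rightarrow> nat \<Rightarrow> nat" where
  "digit q u i = (u div q ^ i) mod q"

definition wt_q :: "nat \<Rightarrow> nat \<Rightarrow> nat \<Rightarrow> nat" where
  "wt_q q n u = (\<Sum>i<n. digit q u i)"

definition O_q :: "nat \<Rightarrow> nat \<Rightarrow> nat \<Rightarrow> nat" where
  "O_q q n u = (\<Sum>i\<in>{i. i < n \<and> odd i}. digit q u i)"

definition E_q :: "nat \<Rightarrow> nat \<Rightarrow> nat \<Rightarrow> nat" where
  "E_q q n u = (\<Sum>i\<in>{i. i < n \<and> even i}. digit q u i)"

definition Z_set :: "nat \<Rightarrow> nat \<Rightarrow> 'a::field \<Rightarrow> nat \<Rightarrow> 'a set" where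
  "Z_set q n \<alpha> r = {\<alpha> ^ u | u. 0 < u \<and> u \<le> q ^ n - 1 \<and>
      int (wt_q q n u) \<le> int n * (int q - 1) - int r - 1}"

definition Theta :: "nat \<Rightarrow> nat \<Rightarrow> 'a::field \<Rightarrow> nat \<Rightarrow> nat \<Rightarrow> 'a set" where
  "Theta q n \<alpha> r k = {\<alpha> ^ u | u. u \<le> q ^ n - 1 \<and>
      int (wt_q q n u) = int n * (int q - 1) - int r \<and>
      \<bar>int (O_q q n u) - int (E_q q n u)\<bar> = int k}"

definition M_set :: "nat \<Rightarrow> nat \<Rightarrow> nat \<Rightarrow> nat set" where
  "M_set q m r = {k. k \<le> m * (q - 1) \<and> (even k \<longleftrightarrow> even r)}"

definition Z_rI :: "nat \<Rightarrow> nat \<Rightarrow> nat \<Rightarrow> 'a::field \<Rightarrow> nat \<Rightarrow> nat set \<Rightarrow> 'a set" where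
  "Z_rI q m n \<alpha> r I = Z_set q n \<alpha> r \<union> (\<Union>k\<in>M_set q m r - I. Theta q n \<alpha> r k)"

definition is_subfield :: "'a::field set \<Rightarrow> bool" where
  "is_subfield K \<longleftrightarrow> 0 \<in> K \<and> 1 \<in> K \<and> (\<forall>x\<in>K. \<forall>y\<in>K. x + y \<in> K \<and> x * y \<in> K)
     \<and> (\<forall>x\<in>K. - x \<in> K) \<and> (\<forall>x\<in>K. x \<noteq> 0 \<longrightarrow> inverse x \<in> K)"

definition primitive_elem :: "'a::{field,finite} \<Rightarrow> bool" where
  "primitive_elem \<alpha> \<longleftrightarrow> (\<forall>x::'a. x \<noteq> 0 \<longrightarrow> (\<exists>u::nat. x = \<alpha> ^ u))"

definition words :: "'a::field set \<Rightarrow> nat \<Rightarrow> (nat \<Rightarrow> 'a) set" where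
  "words K L = {c. (\<forall>i<L. c i \<in> K) \<and> (\<forall>i\<ge>L. c i = 0)}"

definition cyclic_code :: "'a::field set \<Rightarrow> nat \<Rightarrow> 'a set \<Rightarrow> (nat \<Rightarrow> 'a) set" where
  "cyclic_code K N Z = {c \<in> words K N. \<forall>\<beta>\<in>Z. (\<Sum>i<N. c i * \<beta> ^ i) = 0}"

definition extend_code :: "nat \<Rightarrow> (nat \<Rightarrow> 'a::field) set \<Rightarrow> (nat \<Rightarrow> 'a) set" where
  "extend_code N C = (\<lambda>c. c(N := - (\<Sum>i<N. c i))) ` C"

definition kspan :: "'a::field set \<Rightarrow> nat \<Rightarrow> (nat \<Rightarrow> nat \<Rightarrow> 'a) \<Rightarrow> (nat \<Rightarrow> 'a) set" where
  "kspan K d v = {(\<lambda>j. \<Sum>i<d. a i * v i j) | a. \<forall>i<d. a i \<in> K}"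

definition code_dim :: "'a::field set \<Rightarrow> (nat \<Rightarrow> 'a) set \<Rightarrow> nat" where
  "code_dim K C = (LEAST d. \<exists>v. C = kspan K d v)"

definition C_code :: "'a::field set \<Rightarrow> nat \<Rightarrow> nat \<Rightarrow> nat \<Rightarrow> 'a \<Rightarrow> nat \<Rightarrow> nat set \<Rightarrow> (nat \<Rightarrow> 'a) set" where
  "C_code K q m n \<alpha> r I = extend_code (q ^ n - 1) (cyclic_code K (q ^ n - 1) (Z_rI q m n \<alpha> r I))"

definition binomZ :: "int \<Rightarrow> int \<Rightarrow> int" where
  "binomZ a b = (if b < 0 then 0 else \<lfloor>(real_of_int a) gchoose (nat b)\<rfloor>)"

definition Sm :: "nat \<Rightarrow> nat \<Rightarrow> int \<Rightarrow> int" where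
  "Sm q m A = (\<Sum>i\<le>m. (-1) ^ i * int (m choose i) *
      binomZ (A - int i * int q + int m - 1) (A - int i * int q))"

end

theory Submission
  imports Defs "HOL-Library.FuncSet" "HOL-Computational_Algebra.Polynomial" "HOL-Computational_Algebra.Formal_Power_Series"
begin


lemma mult_group_pow:
  fixes G :: "'a::field set"
  assumes fin: "finite G" and z: "0 \<notin> G" and cl: "\<And>x y. x \<in> G \<Longrightarrow> y \<in> G \<Longrightarrow> x * y \<in> G"
    and x: "x \<in> G"
  shows "x ^ card G = 1"
proof -
  have x0: "x \<noteq> 0" using x z by auto
  have inj: "inj_on (\<lambda>g. x * g) G" using x0 by (auto simp: inj_on_def)
  have sub: "(\<lambda>g. x * g) ` G \<subseteq> G" using cl x by auto
  have eq: "(\<lambda>g. x * g) ` G = G"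
    using card_image[OF inj] sub fin by (simp add: card_subset_eq)
  have "prod (\<lambda>g. g) G = prod (\<lambda>g. g) ((\<lambda>g. x * g) ` G)" using eq by simp
  also have "\<dots> = prod (\<lambda>g. x * g) G" using prod.reindex[OF inj] by simp
  also have "\<dots> = x ^ card G * prod (\<lambda>g. g) G" by (simp add: prod.distrib)
  finally have "prod (\<lambda>g. g) G * 1 = prod (\<lambda>g. g) G * x ^ card G" by (simp add: mult.commute)
  moreover have "prod (\<lambda>g. g) G \<noteq> 0" using z fin by (simp add: prod_zero_iff) 
  ultimately show ?thesis by (metis mult_left_cancel)
qed

lemma pow_card_self:
  fixes G :: "'a::field set"
  assumes fin: "finite G" and cl: "\<And>x y. x \<in> G \<Longrightarrow> y \<in> G \<Longrightarrow> x * y \<in> G"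
    and x: "x \<in> G" and z: "0 \<in> G"
  shows "x ^ card G = x"
proof (cases "x = 0")
  case True
  have "card G \<noteq> 0" using fin z by auto
  then show ?thesis using True by simp
next
  case False
  have c: "card G = Suc (card (G - {0}))" using fin z
    by (metis card_Suc_Diff1)
  have "x ^ card (G - {0}) = 1"
    by (rule mult_group_pow) (use fin cl x False in auto)
  then show ?thesis using c by simp
qed

locale ffs =
  fixes K :: "'a::{field,finite} set" and q n :: nat
  assumes sub: "is_subfield K" and cardK: "card K = q"
    and cardF: "card (UNIV::'a set) = q ^ n" and n1: "1 \<le> n"
    and qpp: "\<exists>p l. prime p \<and> q = p ^ l"
begin

lemma finK: "finite K" by simp

lemma K0: "0 \<in> K" and K1: "1 \<in> K" and Kadd: "x \<in> K \<Longrightarrow> y \<in> K \<Longrightarrow> x + y \<in> K"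
  and Kmult: "x \<in> K \<Longrightarrow> y \<in> K \<Longrightarrow> x * y \<in> K" and Kuminus: "x \<in> K \<Longrightarrow> - x \<in> K"
  and Kinv: "x \<in> K \<Longrightarrow> inverse x \<in> K"
  using sub unfolding is_subfield_def by auto

lemma Kdiff: "x \<in> K \<Longrightarrow> y \<in> K \<Longrightarrow> x - y \<in> K"
  using Kadd Kuminus by (metis diff_conv_add_uminus)

lemma q2: "2 \<le> q"
proof -
  have "{0,1} \<subseteq> K" using K0 K1 by auto
  then have "card {0::'a,1} \<le> card K" by (intro card_mono) auto
  then show ?thesis using cardK by simp
qed

lemma K_frob: "k \<in> K \<Longrightarrow> k ^ q = k"
  using pow_card_self[of K k] K0 Kmult cardK by auto

lemma F_frob: "(x::'a) ^ (q ^ n) = x"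
  using pow_card_self[of UNIV x] cardF by auto

lemma F_frob_iter: "(x::'a) ^ (q ^ (n * t)) = x"
proof (induction t)
  case 0 then show ?case by simp
next
  case (Suc t)
  have "x ^ (q ^ (n * Suc t)) = (x ^ (q ^ (n * t))) ^ (q ^ n)"
    by (simp add: power_add power_mult[symmetric] mult.commute)
  then show ?case using Suc F_frob by simp
qed

lemma ofnat_q: "of_nat q = (0::'a)"
proof -
  have inj: "inj_on (\<lambda>k. k + 1) K" by (auto simp: inj_on_def)
  have "(\<lambda>k. k + 1) ` K \<subseteq> K" using Kadd K1 by auto
  then have eq: "(\<lambda>k. k + 1) ` K = K"
    using card_image[OF inj] by (simp add: card_subset_eq)
  have "sum (\<lambda>k. k) K = sum (\<lambda>k. k) ((\<lambda>k. k + 1) ` K)" using eq by simp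
  also have "\<dots> = sum (\<lambda>k. k + 1) K" using sum.reindex[OF inj] by simp
  also have "\<dots> = sum (\<lambda>k. k) K + of_nat (card K)" by (simp add: sum.distrib)
  finally show ?thesis using cardK by simp
qed

lemma char_prime: "prime CHAR('a)" and q_char: "\<exists>l. q = CHAR('a) ^ l"
proof -
  obtain p l where p: "prime p" and ql: "q = p ^ l" using qpp by blast
  have "(of_nat p :: 'a) ^ l = 0" using ofnat_q ql by simp
  then have "of_nat p = (0::'a)" by simp
  then have "CHAR('a) dvd p" by (simp add: of_nat_eq_0_iff_char_dvd)
  then have "CHAR('a) = p" using p
    by (metis CHAR_not_1 One_nat_def prime_nat_iff)
  then show "prime CHAR('a)" "\<exists>l. q = CHAR('a) ^ l" using p ql by auto
qed

lemma frob_add: "((x::'a) + y) ^ q = x ^ q + y ^ q"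
  using q_char freshmans_dream'[OF char_prime] by blast

lemma frob_sum: "(sum (f::'b \<Rightarrow> 'a) A) ^ q = sum (\<lambda>i. f i ^ q) A"
  using q_char freshmans_dream_sum'[OF char_prime] by blast

end


context ffs begin

definition NN where "NN = q ^ n - 1"
definition DD :: "(nat \<Rightarrow> 'a) \<Rightarrow> 'a \<Rightarrow> 'a" where "DD c \<beta> = (\<Sum>i<NN. c i * \<beta> ^ i)"
definition Vset :: "'a set \<Rightarrow> ('a \<Rightarrow> 'a) set" where
  "Vset Z = {h \<in> Z \<rightarrow>\<^sub>E UNIV. \<forall>\<beta>\<in>Z. h (\<beta> ^ q) = (h \<beta>) ^ q}"
definition closed :: "'a set \<Rightarrow> bool" where "closed Z \<longleftrightarrow> (\<forall>\<beta>\<in>Z. \<beta> ^ q \<in> Z)"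

lemma card_roots_frob:
  assumes "2 \<le> M" shows "card {x::'a. x ^ M = x} \<le> M"
proof -
  define P where "P = monom (1::'a) M - [:0,1:]"
  have ev: "poly P x = x ^ M - x" for x by (simp add: P_def poly_monom)
  have c01: "coeff [:0,1::'a:] M = 0" using assms by (simp add: coeff_pCons split: nat.split)
  have cM: "coeff P M = 1" using assms c01 by (simp add: P_def coeff_monom)
  then have P0: "P \<noteq> 0" by auto
  have dg: "degree P \<le> M" unfolding P_def
    by (rule order.trans[OF degree_diff_le_max]) (use assms in \<open>auto simp: degree_monom_eq\<close>)
  have "{x::'a. x ^ M = x} = {x. poly P x = 0}" by (auto simp: ev)
  then show ?thesis using card_poly_roots_bound[OF P0] dg by simp
qed

lemma pow_q_iter: "(x::'a) ^ (q ^ Suc j) = (x ^ (q ^ j)) ^ q"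
  by (simp add: power_mult[symmetric] mult.commute)

lemma pow_q_add: "(x::'a) ^ (q ^ (a + b)) = (x ^ (q ^ a)) ^ (q ^ b)"
  by (simp add: power_mult[symmetric] power_add)

lemma closed_iter: "closed Z \<Longrightarrow> \<gamma> \<in> Z \<Longrightarrow> \<gamma> ^ (q ^ j) \<in> Z"
proof (induction j)
  case 0 then show ?case by simp
next
  case (Suc j)
  then show ?case unfolding pow_q_iter[of \<gamma> j] closed_def by blast
qed

lemma Vset_iter: "h \<in> Vset Z \<Longrightarrow> closed Z \<Longrightarrow> \<gamma> \<in> Z \<Longrightarrow> h (\<gamma> ^ (q ^ j)) = (h \<gamma>) ^ (q ^ j)"
proof (induction j)
  case 0 then show ?case by simp
next
  case (Suc j)
  have "\<gamma> ^ (q ^ j) \<in> Z" using closed_iter Suc by blast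
  then have "h ((\<gamma> ^ (q ^ j)) ^ q) = (h (\<gamma> ^ (q ^ j))) ^ q" using Suc.prems(1) by (auto simp: Vset_def)
  then show ?case unfolding pow_q_iter using Suc by simp
qed

lemma finite_Vset: "finite (Vset Z)"
  unfolding Vset_def by (rule finite_subset[OF _ finite_PiE[of Z "\<lambda>_. UNIV"]]) auto

lemma V_bound: "closed Z \<Longrightarrow> card (Vset Z) \<le> q ^ card Z"
proof (induction "card Z" arbitrary: Z rule: less_induct)
  case less
  show ?case
  proof (cases "Z = {}")
    case True
    then show ?thesis unfolding Vset_def by (simp add: PiE_empty_domain)
  next
    case False
    then obtain \<beta>0 where b0: "\<beta>0 \<in> Z" by blast
    define s where "s = (LEAST s. 0 < s \<and> \<beta>0 ^ (q ^ s) = \<beta>0)"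
    have ex: "0 < n \<and> \<beta>0 ^ (q ^ n) = \<beta>0" using n1 F_frob by auto
    have s1: "0 < s \<and> \<beta>0 ^ (q ^ s) = \<beta>0" unfolding s_def by (rule LeastI[of "\<lambda>s. 0 < s \<and> \<beta>0 ^ (q ^ s) = \<beta>0", OF ex])
    have s2: "\<beta>0 ^ (q ^ t) \<noteq> \<beta>0" if "0 < t" "t < s" for t
      using not_less_Least[of t "\<lambda>s. 0 < s \<and> \<beta>0 ^ (q ^ s) = \<beta>0"] that unfolding s_def by auto
    define Orb where "Orb = range (\<lambda>j. \<beta>0 ^ (q ^ j))"
    have OZ: "Orb \<subseteq> Z" unfolding Orb_def using closed_iter less.prems b0 by auto
    have b0O: "\<beta>0 \<in> Orb" unfolding Orb_def by (metis power_0 power_one_right rangeI)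
    have inj: "inj_on (\<lambda>j. \<beta>0 ^ (q ^ j)) {..<s}"
    proof (rule inj_onI, rule ccontr)
      fix j k assume j: "j \<in> {..<s}" and k: "k \<in> {..<s}" and e: "\<beta>0 ^ q ^ j = \<beta>0 ^ q ^ k" and ne: "j \<noteq> k"
      have key: "\<beta>0 ^ q ^ (a + (s - b)) = \<beta>0" if "a < s" "b < s" "\<beta>0 ^ q ^ a = \<beta>0 ^ q ^ b" for a b
      proof -
        have "\<beta>0 ^ q ^ (a + (s - b)) = (\<beta>0 ^ q ^ a) ^ q ^ (s - b)" by (rule pow_q_add)
        also have "\<dots> = (\<beta>0 ^ q ^ b) ^ q ^ (s - b)" using that by simp
        also have "\<dots> = \<beta>0 ^ q ^ s" using that pow_q_add[of \<beta>0 b "s - b"] by simp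
        finally show ?thesis using s1 by simp
      qed
      show False
      proof (cases "j < k")
        case True
        have lt1: "0 < j + (s - k)" "j + (s - k) < s" using True j k by auto
        have "\<beta>0 ^ q ^ (j + (s - k)) = \<beta>0" using key[OF _ _ e] j k by auto
        then show False using s2[OF lt1] by simp
      next
        case False
        have lt1: "0 < k + (s - j)" "k + (s - j) < s" using False ne j k by auto
        have "\<beta>0 ^ q ^ (k + (s - j)) = \<beta>0" using key[OF _ _ e[symmetric]] j k by auto
        then show False using s2[OF lt1] by simp
      qed
    qed
    have sO: "s \<le> card Orb"
    proof -
      have "(\<lambda>j. \<beta>0 ^ (q ^ j)) ` {..<s} \<subseteq> Orb" unfolding Orb_def by auto
      then have "card ((\<lambda>j. \<beta>0 ^ (q ^ j)) ` {..<s}) \<le> card Orb" by (intro card_mono) auto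
      then show ?thesis using card_image[OF inj] by simp
    qed
    have clZO: "closed (Z - Orb)"
      unfolding closed_def
    proof
      fix \<gamma> assume g: "\<gamma> \<in> Z - Orb"
      have "\<gamma> ^ q \<in> Z" using g less.prems by (auto simp: closed_def)
      moreover have "\<gamma> ^ q \<notin> Orb"
      proof
        assume "\<gamma> ^ q \<in> Orb"
        then obtain j where j: "\<gamma> ^ q = \<beta>0 ^ (q ^ j)" unfolding Orb_def by auto
        have "\<gamma> = \<gamma> ^ (q ^ (1 + (n - 1)))" using F_frob n1 by simp
        also have "\<dots> = (\<gamma> ^ q) ^ (q ^ (n - 1))" using pow_q_add[of \<gamma> 1 "n - 1"] by simp
        also have "\<dots> = \<beta>0 ^ (q ^ (j + (n - 1)))" using j pow_q_add by simp
        finally show False using g unfolding Orb_def by auto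
      qed
      ultimately show "\<gamma> ^ q \<in> Z - Orb" by blast
    qed
    have cZO: "card (Z - Orb) = card Z - card Orb" using OZ by (simp add: card_Diff_subset)
    have lt: "card (Z - Orb) < card Z" using b0 b0O by (intro psubset_card_mono) auto
    have IH: "card (Vset (Z - Orb)) \<le> q ^ card (Z - Orb)" using less.hyps[OF lt clZO] .
    define \<phi> where "\<phi> h = (h \<beta>0, restrict h (Z - Orb))" for h :: "'a \<Rightarrow> 'a"
    have injphi: "inj_on \<phi> (Vset Z)"
    proof (rule inj_onI)
      fix h h' assume h: "h \<in> Vset Z" and h': "h' \<in> Vset Z" and e: "\<phi> h = \<phi> h'"
      show "h = h'"
      proof
        fix x
        show "h x = h' x"
        proof (cases "x \<in> Z")
          case False
          then show ?thesis using h h' unfolding Vset_def by (auto simp: PiE_def extensional_def)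
        next
          case True
          show ?thesis
          proof (cases "x \<in> Orb")
            case True
            then obtain j where j: "x = \<beta>0 ^ (q ^ j)" unfolding Orb_def by auto
            have "h x = (h \<beta>0) ^ (q ^ j)" using Vset_iter[OF h less.prems b0] j by simp
            moreover have "h' x = (h' \<beta>0) ^ (q ^ j)" using Vset_iter[OF h' less.prems b0] j by simp
            ultimately show ?thesis using e unfolding \<phi>_def by simp
          next
            case False
            then show ?thesis using e \<open>x \<in> Z\<close> unfolding \<phi>_def by (metis Diff_iff prod.inject restrict_apply')
          qed
        qed
      qed
    qed
    have img: "\<phi> ` Vset Z \<subseteq> {x. x ^ (q ^ s) = x} \<times> Vset (Z - Orb)"
    proof
      fix y assume "y \<in> \<phi> ` Vset Z"
      then obtain h where h: "h \<in> Vset Z" and y: "y = \<phi> h" by auto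
      have "(h \<beta>0) ^ (q ^ s) = h \<beta>0" using Vset_iter[OF h less.prems b0, of s] s1 by simp
      moreover have "restrict h (Z - Orb) \<in> Vset (Z - Orb)"
        using h clZO unfolding Vset_def closed_def by auto
      ultimately show "y \<in> {x. x ^ (q ^ s) = x} \<times> Vset (Z - Orb)" using y unfolding \<phi>_def by auto
    qed
    have "card (Vset Z) = card (\<phi> ` Vset Z)" using card_image[OF injphi] by simp
    also have "\<dots> \<le> card ({x::'a. x ^ (q ^ s) = x} \<times> Vset (Z - Orb))"
      using img by (intro card_mono) (auto simp: finite_Vset)
    also have "\<dots> = card {x::'a. x ^ (q ^ s) = x} * card (Vset (Z - Orb))" by (simp add: card_cartesian_product)
    also have "\<dots> \<le> q ^ s * q ^ card (Z - Orb)"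
    proof (rule mult_mono)
      have "q ^ 1 \<le> q ^ s" using q2 s1 by (intro power_increasing) auto
      then show "card {x::'a. x ^ (q ^ s) = x} \<le> q ^ s" using q2 by (intro card_roots_frob) auto
    qed (use IH in auto)
    also have "\<dots> \<le> q ^ card Orb * q ^ card (Z - Orb)"
      using sO q2 by (intro mult_right_mono power_increasing) auto
    also have "\<dots> = q ^ card Z"
      using cZO card_mono[OF _ OZ] by (simp add: power_add[symmetric])
    finally show ?thesis .
  qed
qed

end


lemma card_words_gen:
  assumes "finite K"
  shows "card (words K L) = card K ^ L" and "finite (words K L)"
proof -
  define ext where "ext f = (\<lambda>i. if i < L then f i else 0)" for f :: "nat \<Rightarrow> 'a"
  have eq: "words K L = ext ` ({..<L} \<rightarrow>\<^sub>E K)"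
  proof
    show "words K L \<subseteq> ext ` ({..<L} \<rightarrow>\<^sub>E K)"
    proof
      fix c assume c: "c \<in> words K L"
      have "c = ext (restrict c {..<L})" using c unfolding ext_def words_def by auto
      moreover have "restrict c {..<L} \<in> {..<L} \<rightarrow>\<^sub>E K" using c unfolding words_def by auto
      ultimately show "c \<in> ext ` ({..<L} \<rightarrow>\<^sub>E K)" by blast
    qed
    show "ext ` ({..<L} \<rightarrow>\<^sub>E K) \<subseteq> words K L"
    proof
      fix c assume "c \<in> ext ` ({..<L} \<rightarrow>\<^sub>E K)"
      then obtain f where f: "f \<in> {..<L} \<rightarrow>\<^sub>E K" and c: "c = ext f" by blast
      have "\<forall>i<L. f i \<in> K" using PiE_mem[OF f] by simp
      then show "c \<in> words K L" unfolding c words_def ext_def by simp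
    qed
  qed
  have inj: "inj_on ext ({..<L} \<rightarrow>\<^sub>E K)"
  proof (rule inj_onI)
    fix f g assume f: "f \<in> {..<L} \<rightarrow>\<^sub>E K" and g: "g \<in> {..<L} \<rightarrow>\<^sub>E K" and e: "ext f = ext g"
    show "f = g"
    proof
      fix i show "f i = g i"
      proof (cases "i < L")
        case True then show ?thesis using fun_cong[OF e, of i] unfolding ext_def by simp
      next
        case False then show ?thesis using PiE_arb[OF f, of i] PiE_arb[OF g, of i] by simp
      qed
    qed
  qed
  have "card (ext ` ({..<L} \<rightarrow>\<^sub>E K)) = card ({..<L} \<rightarrow>\<^sub>E K)" by (rule card_image[OF inj])
  also have "\<dots> = card K ^ L" by (simp add: card_PiE)
  finally show "card (words K L) = card K ^ L" using eq by simp
  show "finite (words K L)" unfolding eq using assms by (intro finite_imageI finite_PiE) auto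
qed

context ffs begin

lemma NN_pos: "1 \<le> NN"
proof -
  have "q ^ 1 \<le> q ^ n" using q2 n1 by (intro power_increasing) auto
  then show ?thesis using q2 unfolding NN_def by auto
qed

lemma card_nonzero: "card (UNIV - {0::'a}) = NN"
  using cardF unfolding NN_def by (simp add: card_Diff_singleton)

lemma DD_inj0:
  assumes c: "\<And>i. NN \<le> i \<Longrightarrow> c i = 0" and z: "\<And>\<beta>. \<beta> \<noteq> 0 \<Longrightarrow> DD c \<beta> = 0"
  shows "c i = 0"
proof -
  define P where "P = (\<Sum>i<NN. monom (c i) i)"
  have ev: "poly P x = DD c x" for x unfolding P_def DD_def by (simp add: poly_sum poly_monom)
  have co: "coeff P i = c i" for i
  proof -
    have "coeff P i = (\<Sum>j<NN. if i = j then c j else 0)" unfolding P_def by (simp add: coeff_sum coeff_monom)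
    also have "\<dots> = (if i < NN then c i else 0)" by (simp add: sum.delta)
    finally show ?thesis using c by (auto simp: not_less)
  qed
  have "P = 0"
  proof (rule ccontr)
    assume P0: "P \<noteq> 0"
    have dg: "degree P \<le> NN - 1"
      by (rule degree_le) (use co c in auto)
    have "UNIV - {0} \<subseteq> {x. poly P x = 0}" using z ev by auto
    then have "card (UNIV - {0::'a}) \<le> card {x. poly P x = 0}" by (intro card_mono) auto
    then have "NN \<le> degree P" using card_poly_roots_bound[OF P0] card_nonzero by simp
    then show False using dg NN_pos by simp
  qed
  then show ?thesis using co[of i] by simp
qed

definition CC where "CC Z = cyclic_code K NN Z"

lemma CC_words: "CC Z \<subseteq> words K NN" unfolding CC_def cyclic_code_def by auto
lemma finite_words: "finite (words K L)" using card_words_gen finK by blast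
lemma card_words: "card (words K L) = q ^ L" using card_words_gen finK cardK by metis
lemma finite_CC: "finite (CC Z)" using finite_subset[OF CC_words finite_words] .

lemma DD_diff: "DD (\<lambda>i. a i - b i) \<beta> = DD a \<beta> - DD b \<beta>"
  unfolding DD_def by (simp add: sum_subtractf left_diff_distrib)
lemma DD_add: "DD (\<lambda>i. a i + b i) \<beta> = DD a \<beta> + DD b \<beta>"
  unfolding DD_def by (simp add: sum.distrib distrib_right)

lemma DD_frob: assumes "c \<in> words K NN" shows "(DD c \<beta>) ^ q = DD c (\<beta> ^ q)"
proof -
  have "(DD c \<beta>) ^ q = (\<Sum>i<NN. (c i * \<beta> ^ i) ^ q)" unfolding DD_def by (rule frob_sum)
  also have "\<dots> = (\<Sum>i<NN. c i * (\<beta> ^ q) ^ i)"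
  proof (rule sum.cong)
    fix i assume "i \<in> {..<NN}"
    then have "c i \<in> K" using assms unfolding words_def by auto
    then show "(c i * \<beta> ^ i) ^ q = c i * (\<beta> ^ q) ^ i"
      by (simp add: power_mult_distrib K_frob power_mult[symmetric] mult.commute)
  qed simp
  finally show ?thesis unfolding DD_def .
qed

lemma words_diff: "a \<in> words K L \<Longrightarrow> b \<in> words K L \<Longrightarrow> (\<lambda>i. a i - b i) \<in> words K L"
  unfolding words_def using Kdiff by auto
lemma words_add: "a \<in> words K L \<Longrightarrow> b \<in> words K L \<Longrightarrow> (\<lambda>i. a i + b i) \<in> words K L"
  unfolding words_def using Kadd by auto

lemma lower_bound:
  assumes cl: "closed Z"
  shows "q ^ NN \<le> card (CC Z) * card (Vset Z)"
proof -
  define T where "T = words K NN"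
  define \<rho> where "\<rho> c = restrict (DD c) Z" for c
  define sel where "sel y = (SOME c. c \<in> T \<and> \<rho> c = y)" for y
  define \<psi> where "\<psi> c = ((\<lambda>i. c i - sel (\<rho> c) i), \<rho> c)" for c
  have selp: "sel (\<rho> c) \<in> T \<and> \<rho> (sel (\<rho> c)) = \<rho> c" if "c \<in> T" for c
    unfolding sel_def by (rule someI[of _ c]) (use that in auto)
  have inj: "inj_on \<psi> T"
  proof (rule inj_onI)
    fix c c' assume "c \<in> T" "c' \<in> T" and e: "\<psi> c = \<psi> c'"
    then have r: "\<rho> c = \<rho> c'" unfolding \<psi>_def by simp
    show "c = c'"
    proof
      fix i
      have "c i - sel (\<rho> c) i = c' i - sel (\<rho> c') i" using e unfolding \<psi>_def by (simp add: fun_eq_iff)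
      then show "c i = c' i" using r by simp
    qed
  qed
  have img: "\<psi> ` T \<subseteq> CC Z \<times> Vset Z"
  proof
    fix y assume "y \<in> \<psi> ` T"
    then obtain c where c: "c \<in> T" and y: "y = \<psi> c" by auto
    have s: "sel (\<rho> c) \<in> T" "\<rho> (sel (\<rho> c)) = \<rho> c" using selp[OF c] by auto
    have "(\<lambda>i. c i - sel (\<rho> c) i) \<in> CC Z"
      unfolding CC_def cyclic_code_def
    proof (intro CollectI conjI ballI)
      show "(\<lambda>i. c i - sel (\<rho> c) i) \<in> words K NN" using words_diff c s unfolding T_def by auto
      fix \<beta> assume b: "\<beta> \<in> Z"
      have "DD (sel (\<rho> c)) \<beta> = DD c \<beta>" using fun_cong[OF s(2), of \<beta>] b unfolding \<rho>_def by simp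
      then have "DD (\<lambda>i. c i - sel (\<rho> c) i) \<beta> = 0" by (simp add: DD_diff)
      then show "(\<Sum>i<NN. (c i - sel (\<rho> c) i) * \<beta> ^ i) = 0" unfolding DD_def .
    qed
    moreover have "\<rho> c \<in> Vset Z"
      unfolding Vset_def \<rho>_def using cl DD_frob[of c] c unfolding T_def closed_def by auto
    ultimately show "y \<in> CC Z \<times> Vset Z" using y unfolding \<psi>_def by auto
  qed
  have "q ^ NN = card T" unfolding T_def by (simp add: card_words)
  also have "\<dots> = card (\<psi> ` T)" using card_image[OF inj] by simp
  also have "\<dots> \<le> card (CC Z \<times> Vset Z)" using img by (intro card_mono) (auto simp: finite_CC finite_Vset)
  also have "\<dots> = card (CC Z) * card (Vset Z)" by (simp add: card_cartesian_product)
  finally show ?thesis .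
qed

lemma upper_bound:
  shows "card (CC Z) * card (CC (UNIV - {0} - Z)) \<le> q ^ NN"
proof -
  define \<psi> where "\<psi> ab = (\<lambda>i. fst ab i + snd ab i)" for ab :: "(nat \<Rightarrow> 'a) \<times> (nat \<Rightarrow> 'a)"
  have inj: "inj_on \<psi> (CC Z \<times> CC (UNIV - {0} - Z))"
  proof (rule inj_onI)
    fix x y assume x: "x \<in> CC Z \<times> CC (UNIV - {0} - Z)" and y: "y \<in> CC Z \<times> CC (UNIV - {0} - Z)"
      and e: "\<psi> x = \<psi> y"
    obtain a b where xab: "x = (a, b)" by force
    obtain a' b' where yab: "y = (a', b')" by force
    have a: "a \<in> CC Z" "a' \<in> CC Z" and b: "b \<in> CC (UNIV - {0} - Z)" "b' \<in> CC (UNIV - {0} - Z)"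
      using x y xab yab by auto
    have ab: "a i + b i = a' i + b' i" for i using fun_cong[OF e, of i] xab yab unfolding \<psi>_def by simp
    define d where "d i = a i - a' i" for i
    have d2: "d i = b' i - b i" for i using ab[of i] unfolding d_def by (simp add: algebra_simps)
    have dz: "d i = 0" for i
    proof (rule DD_inj0)
      fix i assume "NN \<le> i"
      then show "d i = 0" using a unfolding d_def CC_def cyclic_code_def words_def by auto
    next
      fix \<beta> :: 'a assume b0: "\<beta> \<noteq> 0"
      show "DD d \<beta> = 0"
      proof (cases "\<beta> \<in> Z")
        case True
        then have "DD a \<beta> = 0" "DD a' \<beta> = 0" using a unfolding CC_def cyclic_code_def DD_def by auto
        then show ?thesis using DD_diff[of a a' \<beta>] unfolding d_def by simp
      next
        case False
        then have "DD b \<beta> = 0" "DD b' \<beta> = 0" using b b0 unfolding CC_def cyclic_code_def DD_def by auto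
        moreover have "d = (\<lambda>i. b' i - b i)" using d2 by auto
        ultimately show ?thesis using DD_diff[of b' b \<beta>] by simp
      qed
    qed
    have "a = a'" using dz unfolding d_def by auto
    moreover have "b = b'"
    proof
      fix i show "b i = b' i" using dz[of i] d2[of i] by simp
    qed
    ultimately show "x = y" using xab yab by simp
  qed
  have img: "\<psi> ` (CC Z \<times> CC (UNIV - {0} - Z)) \<subseteq> words K NN"
  proof
    fix w assume "w \<in> \<psi> ` (CC Z \<times> CC (UNIV - {0} - Z))"
    then obtain a b where "a \<in> CC Z" "b \<in> CC (UNIV - {0} - Z)" "w = (\<lambda>i. a i + b i)"
      unfolding \<psi>_def by auto
    then show "w \<in> words K NN" using CC_words words_add by blast
  qed
  have "card (CC Z) * card (CC (UNIV - {0} - Z)) = card (CC Z \<times> CC (UNIV - {0} - Z))"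
    by (simp add: card_cartesian_product)
  also have "\<dots> = card (\<psi> ` (CC Z \<times> CC (UNIV - {0} - Z)))" using card_image[OF inj] by simp
  also have "\<dots> \<le> card (words K NN)" using img by (intro card_mono finite_words)
  finally show ?thesis by (simp add: card_words)
qed

lemma code_card:
  assumes cl: "closed Z" and z0: "0 \<notin> Z"
  shows "card (CC Z) = q ^ (NN - card Z)"
proof -
  define Z' where "Z' = UNIV - {0} - Z"
  have cl': "closed Z'"
    unfolding closed_def
  proof
    fix \<beta> assume b: "\<beta> \<in> Z'"
    have "\<beta> ^ q \<noteq> 0" using b unfolding Z'_def by auto
    moreover have "\<beta> ^ q \<notin> Z"
    proof
      assume "\<beta> ^ q \<in> Z"
      then have "(\<beta> ^ q) ^ (q ^ (n - 1)) \<in> Z" using closed_iter[OF cl] by blast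
      moreover have "(\<beta> ^ q) ^ (q ^ (n - 1)) = \<beta>" using pow_q_add[of \<beta> 1 "n - 1"] n1 F_frob by simp
      ultimately show False using b unfolding Z'_def by auto
    qed
    ultimately show "\<beta> ^ q \<in> Z'" unfolding Z'_def by auto
  qed
  have cz: "card Z + card Z' = NN"
  proof -
    have "Z \<subseteq> UNIV - {0}" using z0 by auto
    then have "card Z' = card (UNIV - {0::'a}) - card Z" unfolding Z'_def by (simp add: card_Diff_subset)
    moreover have "card Z \<le> card (UNIV - {0::'a})" using \<open>Z \<subseteq> UNIV - {0}\<close> by (intro card_mono) auto
    ultimately show ?thesis using card_nonzero by simp
  qed
  have l1: "q ^ NN \<le> card (CC Z) * q ^ card Z"
    using le_trans[OF lower_bound[OF cl] mult_le_mono2[OF V_bound[OF cl]]] .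
  have l2: "q ^ NN \<le> card (CC Z') * q ^ card Z'"
    using le_trans[OF lower_bound[OF cl'] mult_le_mono2[OF V_bound[OF cl']]] .
  have u: "card (CC Z) * card (CC Z') \<le> q ^ NN" using upper_bound unfolding Z'_def .
  have qz: "0 < q ^ card Z" "0 < q ^ card Z'" using q2 by auto
  have NNs: "q ^ NN = q ^ card Z' * q ^ card Z" using cz by (metis add.commute power_add)
  have a1: "q ^ card Z' \<le> card (CC Z)"
    using mult_right_le_imp_le[of "q ^ card Z'" "q ^ card Z" "card (CC Z)"] l1 NNs qz(1) by simp
  have b1: "q ^ card Z \<le> card (CC Z')"
    using mult_right_le_imp_le[of "q ^ card Z" "q ^ card Z'" "card (CC Z')"] l2 NNs qz(2) by (simp add: mult.commute)
  have c1: "card (CC Z) * q ^ card Z \<le> card (CC Z) * card (CC Z')" by (rule mult_le_mono2[OF b1])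
  have c2: "card (CC Z) * q ^ card Z \<le> q ^ card Z' * q ^ card Z" using order.trans[OF c1 u] unfolding NNs .
  have "card (CC Z) \<le> q ^ card Z'" by (rule mult_right_le_imp_le[OF c2 qz(1)])
  moreover have "NN - card Z = card Z'" using cz by simp
  ultimately show ?thesis using a1 by simp
qed

end


context ffs begin

lemma kspan_img: "kspan K j v = (\<lambda>a. \<lambda>x. \<Sum>i<j. a i * v i x) ` ({..<j} \<rightarrow>\<^sub>E K)"
proof
  show "kspan K j v \<subseteq> (\<lambda>a. \<lambda>x. \<Sum>i<j. a i * v i x) ` ({..<j} \<rightarrow>\<^sub>E K)"
  proof
    fix s assume "s \<in> kspan K j v"
    then obtain a where a: "\<forall>i<j. a i \<in> K" and s: "s = (\<lambda>x. \<Sum>i<j. a i * v i x)"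
      unfolding kspan_def by blast
    have "s = (\<lambda>x. \<Sum>i<j. restrict a {..<j} i * v i x)" unfolding s by simp
    moreover have "restrict a {..<j} \<in> {..<j} \<rightarrow>\<^sub>E K" using a by auto
    ultimately show "s \<in> (\<lambda>a. \<lambda>x. \<Sum>i<j. a i * v i x) ` ({..<j} \<rightarrow>\<^sub>E K)" by blast
  qed
  show "(\<lambda>a. \<lambda>x. \<Sum>i<j. a i * v i x) ` ({..<j} \<rightarrow>\<^sub>E K) \<subseteq> kspan K j v"
  proof
    fix s assume "s \<in> (\<lambda>a. \<lambda>x. \<Sum>i<j. a i * v i x) ` ({..<j} \<rightarrow>\<^sub>E K)"
    then obtain a where a: "a \<in> {..<j} \<rightarrow>\<^sub>E K" and s: "s = (\<lambda>x. \<Sum>i<j. a i * v i x)" by blast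
    have "\<forall>i<j. a i \<in> K" using PiE_mem[OF a] by simp
    then show "s \<in> kspan K j v" unfolding kspan_def s by blast
  qed
qed

lemma kspan_card_le: "card (kspan K j v) \<le> q ^ j"
proof -
  have "card (kspan K j v) \<le> card ({..<j} \<rightarrow>\<^sub>E K)" unfolding kspan_img
    by (rule card_image_le) (simp add: finite_PiE)
  also have "\<dots> = q ^ j" by (simp add: card_PiE cardK)
  finally show ?thesis .
qed

lemma finite_kspan: "finite (kspan K j v)"
  unfolding kspan_img by (intro finite_imageI finite_PiE) auto

lemma kspan_step:
  "kspan K (Suc j) (v(j := w)) = (\<lambda>(s, a). \<lambda>x. s x + a * w x) ` (kspan K j v \<times> K)"
proof
  show "kspan K (Suc j) (v(j := w)) \<subseteq> (\<lambda>(s, a). \<lambda>x. s x + a * w x) ` (kspan K j v \<times> K)"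
  proof
    fix t assume "t \<in> kspan K (Suc j) (v(j := w))"
    then obtain a where a: "\<forall>i<Suc j. a i \<in> K" and t: "t = (\<lambda>x. \<Sum>i<Suc j. a i * (v(j := w)) i x)"
      unfolding kspan_def by blast
    have "(\<lambda>x. \<Sum>i<j. a i * (v(j := w)) i x) = (\<lambda>x. \<Sum>i<j. a i * v i x)" by simp
    then have t2: "t = (\<lambda>x. (\<Sum>i<j. a i * v i x) + a j * w x)" unfolding t by (simp add: fun_eq_iff)
    have "(\<lambda>x. \<Sum>i<j. a i * v i x) \<in> kspan K j v" using a unfolding kspan_def by auto
    moreover have "a j \<in> K" using a by auto
    ultimately show "t \<in> (\<lambda>(s, a). \<lambda>x. s x + a * w x) ` (kspan K j v \<times> K)"
      unfolding t2 by (auto intro!: image_eqI[where x = "((\<lambda>x. \<Sum>i<j. a i * v i x), a j)"])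
  qed
  show "(\<lambda>(s, a). \<lambda>x. s x + a * w x) ` (kspan K j v \<times> K) \<subseteq> kspan K (Suc j) (v(j := w))"
  proof
    fix t assume "t \<in> (\<lambda>(s, a). \<lambda>x. s x + a * w x) ` (kspan K j v \<times> K)"
    then obtain s c where s: "s \<in> kspan K j v" and c: "c \<in> K" and t: "t = (\<lambda>x. s x + c * w x)" by auto
    obtain b where b: "\<forall>i<j. b i \<in> K" and s2: "s = (\<lambda>x. \<Sum>i<j. b i * v i x)"
      using s unfolding kspan_def by blast
    define b' where "b' = b(j := c)"
    have "t = (\<lambda>x. \<Sum>i<Suc j. b' i * (v(j := w)) i x)"
      unfolding t s2 b'_def by (simp add: fun_eq_iff)
    moreover have "\<forall>i<Suc j. b' i \<in> K" using b c unfolding b'_def by (auto simp: less_Suc_eq)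
    ultimately show "t \<in> kspan K (Suc j) (v(j := w))" unfolding kspan_def by blast
  qed
qed

lemma kspan_step_inj:
  assumes w: "w \<notin> kspan K j v"
  shows "inj_on (\<lambda>(s, a). \<lambda>x. s x + a * w x) (kspan K j v \<times> K)"
proof (rule inj_onI, clarify)
  fix s a s' a'
  assume s: "s \<in> kspan K j v" and a: "a \<in> K" and s': "s' \<in> kspan K j v" and a': "a' \<in> K"
    and e: "(\<lambda>x. s x + a * w x) = (\<lambda>x. s' x + a' * w x)"
  obtain b where b: "\<forall>i<j. b i \<in> K" and sb: "s = (\<lambda>x. \<Sum>i<j. b i * v i x)"
    using s unfolding kspan_def by blast
  obtain b' where b': "\<forall>i<j. b' i \<in> K" and sb': "s' = (\<lambda>x. \<Sum>i<j. b' i * v i x)"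
    using s' unfolding kspan_def by blast
  have aa: "a = a'"
  proof (rule ccontr)
    assume ne: "a \<noteq> a'"
    define g where "g = inverse (a - a')"
    have wx: "w x = (\<Sum>i<j. ((b' i - b i) * g) * v i x)" for x
    proof -
      have "s x + a * w x = s' x + a' * w x" using fun_cong[OF e, of x] by simp
      then have "(a - a') * w x = s' x - s x" by (simp add: algebra_simps)
      then have "w x = (s' x - s x) * g" unfolding g_def using ne
        by (metis (no_types, lifting) eq_divide_eq divide_inverse mult.commute right_minus_eq)
      also have "\<dots> = (\<Sum>i<j. (b' i * v i x - b i * v i x) * g)"
        unfolding sb sb' by (simp only: sum_subtractf[symmetric] sum_distrib_right)
      also have "\<dots> = (\<Sum>i<j. ((b' i - b i) * g) * v i x)"
        by (rule sum.cong) (simp_all add: algebra_simps)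
      finally show ?thesis .
    qed
    have "\<forall>i<j. (b' i - b i) * g \<in> K" using b b' Kdiff Kmult Kinv a a' Kdiff unfolding g_def by auto
    then have "w \<in> kspan K j v" unfolding kspan_def using wx by (auto simp: fun_eq_iff)
    then show False using w by simp
  qed
  moreover have "s = s'" using e aa by (simp add: fun_eq_iff)
  ultimately show "s = s' \<and> a = a'" by simp
qed

lemma code_dim_eq:
  assumes add: "\<And>a b. a \<in> C \<Longrightarrow> b \<in> C \<Longrightarrow> (\<lambda>x. a x + b x) \<in> C"
    and smul: "\<And>k a. k \<in> K \<Longrightarrow> a \<in> C \<Longrightarrow> (\<lambda>x. k * a x) \<in> C"
    and cardC: "card C = q ^ d"
  shows "code_dim K C = d"
proof -
  have finC: "finite C" using cardC q2 by (metis card.infinite nat.simps(3) not_numeral_le_zero power_eq_0_iff zero_le_numeral)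
  have neC: "C \<noteq> {}" using cardC q2 by auto
  then obtain c0 where c0: "c0 \<in> C" by blast
  have zC: "(\<lambda>x. 0) \<in> C" using smul[OF K0 c0] by simp
  have sp_sub: "s \<in> kspan K j v \<Longrightarrow> (\<forall>i<j. v i \<in> C) \<Longrightarrow> s \<in> C" for s j v
  proof (induction j arbitrary: s)
    case 0 then show ?case using zC unfolding kspan_def by auto
  next
    case (Suc j)
    obtain a where a: "\<forall>i<Suc j. a i \<in> K" and s: "s = (\<lambda>x. \<Sum>i<Suc j. a i * v i x)"
      using Suc.prems unfolding kspan_def by blast
    have "(\<lambda>x. \<Sum>i<j. a i * v i x) \<in> kspan K j v" unfolding kspan_def using a by auto
    then have "(\<lambda>x. \<Sum>i<j. a i * v i x) \<in> C" using Suc.IH Suc.prems(2) by auto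
    moreover have "(\<lambda>x. a j * v j x) \<in> C" using smul a Suc.prems(2) by auto
    ultimately show ?case unfolding s using add by simp
  qed
  have build: "j \<le> d \<Longrightarrow> \<exists>v. (\<forall>i<j. v i \<in> C) \<and> card (kspan K j v) = q ^ j" for j
  proof (induction j)
    case 0
    have "kspan K 0 v = {\<lambda>x. 0}" for v unfolding kspan_def by auto
    then show ?case by auto
  next
    case (Suc j)
    then obtain v where v: "\<forall>i<j. v i \<in> C" and cv: "card (kspan K j v) = q ^ j" by auto
    have "q ^ j < q ^ d" using Suc.prems q2 by (intro power_strict_increasing) auto
    then have "kspan K j v \<noteq> C" using cv cardC by auto
    moreover have "kspan K j v \<subseteq> C" using sp_sub v by blast
    ultimately obtain w where w: "w \<in> C" "w \<notin> kspan K j v" by blast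
    have "card (kspan K (Suc j) (v(j := w))) = card (kspan K j v \<times> K)"
      unfolding kspan_step by (rule card_image[OF kspan_step_inj[OF w(2)]])
    also have "\<dots> = q ^ Suc j" using cv cardK by (simp add: card_cartesian_product)
    finally have cs: "card (kspan K (Suc j) (v(j := w))) = q ^ Suc j" .
    have "\<forall>i<Suc j. (v(j := w)) i \<in> C" using v w by (auto simp: less_Suc_eq)
    then show ?case using cs by blast
  qed
  obtain v where v: "\<forall>i<d. v i \<in> C" and cv: "card (kspan K d v) = q ^ d" using build by blast
  have "kspan K d v = C"
    using sp_sub[OF _ v] cv cardC finC by (metis card_subset_eq subsetI)
  then have ex: "\<exists>v. C = kspan K d v" by metis
  have lb: "d \<le> d'" if hd: "\<exists>v. C = kspan K d' v" for d'
  proof -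
    obtain v' where "C = kspan K d' v'" using hd by blast
    then have "q ^ d \<le> q ^ d'" using kspan_card_le cardC by metis
    then show ?thesis using q2 by (simp add: power_le_imp_le_exp)
  qed
  show ?thesis unfolding code_dim_def
    by (rule Least_equality[of "\<lambda>d'. \<exists>v. C = kspan K d' v", OF ex lb])
qed

end


lemma digit_0: "digit q u 0 = u mod q" by (simp add: digit_def)
lemma digit_Suc: "digit q u (Suc i) = digit q (u div q) i"
  by (simp add: digit_def div_mult2_eq)

lemma wt_0: "wt_q q 0 u = 0" by (simp add: wt_q_def)
lemma wt_Suc: "wt_q q (Suc n) u = u mod q + wt_q q n (u div q)"
  unfolding wt_q_def sum.lessThan_Suc_shift by (simp add: digit_0 digit_Suc)

lemma O_alt: "O_q q n u = (\<Sum>i<n. if odd i then digit q u i else 0)"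
proof -
  have "O_q q n u = sum (digit q u) {i \<in> {..<n}. odd i}" unfolding O_q_def
    by (rule arg_cong[where f = "sum (digit q u)"]) auto
  also have "\<dots> = (\<Sum>i<n. if odd i then digit q u i else 0)" by (rule sum.inter_filter) simp
  finally show ?thesis .
qed
lemma E_alt: "E_q q n u = (\<Sum>i<n. if even i then digit q u i else 0)"
proof -
  have "E_q q n u = sum (digit q u) {i \<in> {..<n}. even i}" unfolding E_q_def
    by (rule arg_cong[where f = "sum (digit q u)"]) auto
  also have "\<dots> = (\<Sum>i<n. if even i then digit q u i else 0)" by (rule sum.inter_filter) simp
  finally show ?thesis .
qed
lemma O_0: "O_q q 0 u = 0" by (simp add: O_alt)
lemma E_0: "E_q q 0 u = 0" by (simp add: E_alt)
lemma O_Suc: "O_q q (Suc n) u = E_q q n (u div q)"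
  unfolding O_alt E_alt sum.lessThan_Suc_shift digit_Suc by simp
lemma E_Suc: "E_q q (Suc n) u = u mod q + O_q q n (u div q)"
  unfolding O_alt E_alt sum.lessThan_Suc_shift digit_Suc by (simp add: digit_0)
lemma wt_OE: "wt_q q n u = O_q q n u + E_q q n u"
  unfolding wt_q_def O_alt E_alt sum.distrib[symmetric] by (rule sum.cong) auto

lemma split_card:
  fixes q :: nat
  assumes q: "0 < q"
  shows "card {u. u < q ^ Suc n \<and> P (u mod q) (u div q)} = (\<Sum>d<q. card {u'. u' < q ^ n \<and> P d u'})"
proof -
  define S where "S = (SIGMA d:{..<q}. {u'. u' < q ^ n \<and> P d u'})"
  define m where "m x = snd x * q + fst x" for x :: "nat \<times> nat"
  have eq: "{u. u < q ^ Suc n \<and> P (u mod q) (u div q)} = m ` S"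
  proof
    show "{u. u < q ^ Suc n \<and> P (u mod q) (u div q)} \<subseteq> m ` S"
    proof
      fix u assume u: "u \<in> {u. u < q ^ Suc n \<and> P (u mod q) (u div q)}"
      have "u div q < q ^ n" using u q by (simp add: div_less_iff_less_mult mult.commute)
      then have "(u mod q, u div q) \<in> S" using u q unfolding S_def by auto
      moreover have "u = m (u mod q, u div q)" unfolding m_def by simp
      ultimately show "u \<in> m ` S" by blast
    qed
    show "m ` S \<subseteq> {u. u < q ^ Suc n \<and> P (u mod q) (u div q)}"
    proof
      fix u assume "u \<in> m ` S"
      then obtain d u' where d: "d < q" and u': "u' < q ^ n" "P d u'" and uu: "u = u' * q + d"
        unfolding S_def m_def by auto
      have "u < (u' + 1) * q" using d uu by simp
      also have "\<dots> \<le> q ^ n * q" using u' by (intro mult_right_mono) auto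
      finally have "u < q ^ Suc n" by (simp add: mult.commute)
      moreover have "u mod q = d" "u div q = u'" using d uu by auto
      ultimately show "u \<in> {u. u < q ^ Suc n \<and> P (u mod q) (u div q)}" using u' by auto
    qed
  qed
  have inj: "inj_on m S"
  proof (rule inj_onI)
    fix x y assume x: "x \<in> S" and y: "y \<in> S" and e: "m x = m y"
    have "fst x < q" "fst y < q" using x y unfolding S_def by auto
    then have "m x mod q = fst x" "m y mod q = fst y" "m x div q = snd x" "m y div q = snd y"
      unfolding m_def by auto
    then show "x = y" using e by (simp add: prod_eq_iff)
  qed
  have "card (m ` S) = card S" by (rule card_image[OF inj])
  also have "\<dots> = (\<Sum>d<q. card {u'. u' < q ^ n \<and> P d u'})" unfolding S_def by (subst card_SigmaI) auto
  finally show ?thesis unfolding eq .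
qed

definition fcnt :: "nat \<Rightarrow> nat \<Rightarrow> nat \<Rightarrow> nat" where
  "fcnt q n s = card {u. u < q ^ n \<and> wt_q q n u = s}"

definition hcnt :: "nat \<Rightarrow> nat \<Rightarrow> nat \<Rightarrow> nat \<Rightarrow> nat" where
  "hcnt q n A B = card {u. u < q ^ n \<and> E_q q n u = A \<and> O_q q n u = B}"

lemma fcnt_0: "fcnt q 0 s = (if s = 0 then 1 else 0)"
proof -
  have "{u. u < q ^ 0 \<and> wt_q q 0 u = s} = (if s = 0 then {0} else {})" by (auto simp: wt_0)
  then show ?thesis unfolding fcnt_def by simp
qed

lemma fcnt_Suc: assumes "0 < q"
  shows "fcnt q (Suc n) s = (\<Sum>d<q. if d \<le> s then fcnt q n (s - d) else 0)"
proof -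
  have "fcnt q (Suc n) s = card {u. u < q ^ Suc n \<and> (\<lambda>d u'. d + wt_q q n u' = s) (u mod q) (u div q)}"
    unfolding fcnt_def by (simp add: wt_Suc)
  also have "\<dots> = (\<Sum>d<q. card {u'. u' < q ^ n \<and> d + wt_q q n u' = s})" by (rule split_card[OF assms])
  also have "\<dots> = (\<Sum>d<q. if d \<le> s then fcnt q n (s - d) else 0)"
  proof (rule sum.cong)
    fix d
    show "card {u'. u' < q ^ n \<and> d + wt_q q n u' = s} = (if d \<le> s then fcnt q n (s - d) else 0)"
    proof (cases "d \<le> s")
      case True
      then have "{u'. u' < q ^ n \<and> d + wt_q q n u' = s} = {u. u < q ^ n \<and> wt_q q n u = s - d}" by auto
      then show ?thesis using True unfolding fcnt_def by simp
    next
      case False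
      then have "{u'. u' < q ^ n \<and> d + wt_q q n u' = s} = {}" by auto
      then show ?thesis using False by simp
    qed
  qed simp
  finally show ?thesis .
qed

lemma hcnt_0: "hcnt q 0 A B = (if A = 0 \<and> B = 0 then 1 else 0)"
proof -
  have "{u. u < q ^ 0 \<and> E_q q 0 u = A \<and> O_q q 0 u = B} = (if A = 0 \<and> B = 0 then {0} else {})"
    by (auto simp: E_0 O_0)
  then show ?thesis unfolding hcnt_def by simp
qed

lemma hcnt_Suc: assumes "0 < q"
  shows "hcnt q (Suc n) A B = (\<Sum>d<q. if d \<le> A then hcnt q n B (A - d) else 0)"
proof -
  have "hcnt q (Suc n) A B = card {u. u < q ^ Suc n \<and> (\<lambda>d u'. d + O_q q n u' = A \<and> E_q q n u' = B) (u mod q) (u div q)}"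
    unfolding hcnt_def by (simp add: E_Suc O_Suc)
  also have "\<dots> = (\<Sum>d<q. card {u'. u' < q ^ n \<and> d + O_q q n u' = A \<and> E_q q n u' = B})" by (rule split_card[OF assms])
  also have "\<dots> = (\<Sum>d<q. if d \<le> A then hcnt q n B (A - d) else 0)"
  proof (rule sum.cong)
    fix d
    show "card {u'. u' < q ^ n \<and> d + O_q q n u' = A \<and> E_q q n u' = B} = (if d \<le> A then hcnt q n B (A - d) else 0)"
    proof (cases "d \<le> A")
      case True
      then have "{u'. u' < q ^ n \<and> d + O_q q n u' = A \<and> E_q q n u' = B} = {u. u < q ^ n \<and> E_q q n u = B \<and> O_q q n u = A - d}" by auto
      then show ?thesis using True unfolding hcnt_def by simp
    next
      case False
      then have "{u'. u' < q ^ n \<and> d + O_q q n u' = A \<and> E_q q n u' = B} = {}" by auto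
      then show ?thesis using False by simp
    qed
  qed simp
  finally show ?thesis .
qed

lemma hcnt_eq: assumes "0 < q"
  shows "hcnt q n A B = fcnt q ((n + 1) div 2) A * fcnt q (n div 2) B"
proof (induction n arbitrary: A B)
  case 0 then show ?case by (simp add: hcnt_0 fcnt_0)
next
  case (Suc n)
  have "hcnt q (Suc n) A B = (\<Sum>d<q. if d \<le> A then fcnt q ((n + 1) div 2) B * fcnt q (n div 2) (A - d) else 0)"
    unfolding hcnt_Suc[OF assms] by (rule sum.cong) (simp_all add: Suc.IH)
  also have "\<dots> = fcnt q ((n + 1) div 2) B * (\<Sum>d<q. if d \<le> A then fcnt q (n div 2) (A - d) else 0)"
    by (subst sum_distrib_left) (rule sum.cong, auto)
  also have "\<dots> = fcnt q ((n + 1) div 2) B * fcnt q (Suc (n div 2)) A" by (simp add: fcnt_Suc[OF assms])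
  finally show ?case by (simp add: mult.commute)
qed

lemma wt_le: assumes "0 < q" shows "wt_q q n u \<le> n * (q - 1)"
proof -
  have "digit q u i \<le> q - 1" for i unfolding digit_def using assms
    by (metis Suc_pred' less_Suc_eq_le mod_less_divisor)
  then have "wt_q q n u \<le> (\<Sum>i<n. q - 1)" unfolding wt_q_def by (intro sum_mono) auto
  then show ?thesis by simp
qed

lemma wt_compl: assumes q: "0 < q"
  shows "u < q ^ n \<Longrightarrow> wt_q q n (q ^ n - 1 - u) = n * (q - 1) - wt_q q n u"
proof (induction n arbitrary: u)
  case 0 then show ?case by (simp add: wt_0)
next
  case (Suc n)
  define d where "d = u mod q"
  define u' where "u' = u div q"
  have d: "d < q" using q unfolding d_def by simp
  have u: "u = u' * q + d" unfolding d_def u'_def by simp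
  have u': "u' < q ^ n" using Suc.prems q unfolding u'_def by (simp add: div_less_iff_less_mult mult.commute)
  define v' where "v' = q ^ n - 1 - u'"
  define e where "e = q - 1 - d"
  have e: "e < q" using q unfolding e_def by simp
  have v: "q ^ Suc n - 1 - u = v' * q + e"
  proof -
    have "u' + v' + 1 = q ^ n" using u' unfolding v'_def by simp
    then have "(u' + v' + 1) * q = q ^ Suc n" by (simp add: mult.commute)
    then have "u' * q + v' * q + q = q ^ Suc n" by (simp add: algebra_simps)
    then show ?thesis using u d unfolding e_def by (simp add: algebra_simps)
  qed
  have vm: "(q ^ Suc n - 1 - u) mod q = e" "(q ^ Suc n - 1 - u) div q = v'"
    unfolding v using e by auto
  have "wt_q q (Suc n) (q ^ Suc n - 1 - u) = (q - 1 - d) + (n * (q - 1) - wt_q q n u')"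
    unfolding wt_Suc vm v'_def e_def using Suc.IH[OF u'] by simp
  also have "\<dots> = Suc n * (q - 1) - (d + wt_q q n u')"
  proof -
    have h1: "wt_q q n u' \<le> n * (q - 1)" by (rule wt_le[OF q])
    have h2: "d \<le> q - 1" using d by simp
    have h3: "Suc n * (q - 1) = (q - 1) + n * (q - 1)" by simp
    show ?thesis unfolding h3 using h1 h2 by linarith
  qed
  also have "\<dots> = Suc n * (q - 1) - wt_q q (Suc n) u" unfolding wt_Suc d_def u'_def by simp
  finally show ?case .
qed


definition gq :: "nat \<Rightarrow> int fps" where "gq q = Abs_fps (\<lambda>t. if t < q then 1 else 0)"
definition HH :: "nat \<Rightarrow> int fps" where "HH k = Abs_fps (\<lambda>t. int ((t + k) choose k))"
definition LL :: "int fps" where "LL = 1 - fps_X"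

lemma HH_nth: "fps_nth (HH k) t = int ((t + k) choose k)" by (simp add: HH_def)

lemma gpow: assumes q: "0 < q" shows "fps_nth (gq q ^ n) s = int (fcnt q n s)"
proof (induction n arbitrary: s)
  case 0 then show ?case by (simp add: fcnt_0)
next
  case (Suc n)
  define F where "F d = int (fcnt q n (s - d))" for d
  have "fps_nth (gq q ^ Suc n) s = (\<Sum>i=0..s. (if i \<in> {..<q} then F i else 0))"
  proof -
    have gi: "fps_nth (gq q) i = (if i < q then 1 else 0)" for i by (simp add: gq_def)
    show ?thesis unfolding power_Suc fps_mult_nth by (rule sum.cong) (auto simp: gi Suc.IH F_def)
  qed
  also have "\<dots> = sum F ({0..s} \<inter> {..<q})" by (rule sum.inter_restrict[symmetric]) simp
  also have "\<dots> = sum F ({..<q} \<inter> {0..s})" by (simp add: Int_commute)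
  also have "\<dots> = (\<Sum>d<q. if d \<in> {0..s} then F d else 0)" by (rule sum.inter_restrict) simp
  also have "\<dots> = int (fcnt q (Suc n) s)" unfolding fcnt_Suc[OF q] of_nat_sum F_def
    by (rule sum.cong) auto
  finally show ?case .
qed

lemma gL: assumes q: "0 < q" shows "gq q * LL = 1 - fps_X ^ q"
proof (rule fps_ext)
  fix t
  show "fps_nth (gq q * LL) t = fps_nth (1 - fps_X ^ q) t"
    unfolding LL_def right_diff_distrib using q by (cases t) (auto simp: gq_def)
qed

lemma H0L: "HH 0 * LL = 1"
  by (rule fps_ext) (simp add: HH_def LL_def right_diff_distrib)

lemma HsL: "HH (Suc k) * LL = HH k"
proof (rule fps_ext)
  fix t
  show "fps_nth (HH (Suc k) * LL) t = fps_nth (HH k) t"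
  proof (cases t)
    case 0 then show ?thesis by (simp add: HH_def LL_def right_diff_distrib)
  next
    case (Suc t')
    have "Suc (t' + Suc k) choose Suc k = (t' + Suc k choose k) + (t' + Suc k choose Suc k)"
      by (rule binomial_Suc_Suc)
    then show ?thesis using Suc by (simp add: HH_def LL_def right_diff_distrib)
  qed
qed

lemma HL: "HH k * LL ^ Suc k = 1"
proof (induction k)
  case 0 then show ?case using H0L by simp
next
  case (Suc k)
  have "HH (Suc k) * LL ^ Suc (Suc k) = (HH (Suc k) * LL) * LL ^ Suc k"
    by (simp only: power_Suc[of LL "Suc k"] mult.assoc)
  also have "\<dots> = HH k * LL ^ Suc k" by (simp only: HsL)
  also have "\<dots> = 1" by (rule Suc.IH)
  finally show ?case .
qed

lemma m1: "(-1::int fps) ^ k = fps_const ((-1) ^ k)"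
proof (induction k)
  case 0 then show ?case by simp
next
  case (Suc k)
  have "(-1::int fps) ^ Suc k = - ((-1) ^ k)" by simp
  also have "\<dots> = fps_const ((-1) ^ Suc k)" unfolding Suc by simp
  finally show ?case .
qed
lemma coeff_term: "of_nat c * (- (fps_X ^ q)) ^ k * 1 ^ (n - k) * (G::int fps) = fps_const ((-1)^k * int c) * (fps_X ^ (q * k) * G)"
proof -
  have "of_nat c * (- (fps_X ^ q)) ^ k * 1 ^ (n - k) * (G::int fps) = (of_nat c * (-1) ^ k) * ((fps_X ^ q) ^ k * G)"
    unfolding power_minus[of "fps_X ^ q"] power_one mult_1_right mult.assoc ..
  also have "(of_nat c * (-1) ^ k :: int fps) = fps_const ((-1)^k * int c)"
    unfolding m1 fps_of_nat[symmetric] fps_const_mult[symmetric] by (simp add: mult.commute)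
  also have "(fps_X ^ q) ^ k = (fps_X ^ (q * k) :: int fps)" by (simp add: power_mult)
  finally show ?thesis .
qed

lemma coeff_bin:
  "fps_nth ((1 - fps_X ^ q) ^ n * G) s = (\<Sum>i\<le>n. (-1)^i * int (n choose i) * (if q * i \<le> s then fps_nth G (s - q * i) else 0))"
proof -
  have "(1 - fps_X ^ q :: int fps) ^ n = (- (fps_X ^ q) + 1) ^ n" by simp
  also have "\<dots> = (\<Sum>k\<le>n. of_nat (n choose k) * (- (fps_X ^ q)) ^ k * 1 ^ (n - k))" by (rule binomial_ring)
  finally have e: "(1 - fps_X ^ q :: int fps) ^ n = (\<Sum>k\<le>n. of_nat (n choose k) * (- (fps_X ^ q)) ^ k * 1 ^ (n - k))" .
  show ?thesis unfolding e sum_distrib_right fps_sum_nth coeff_term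
    by (rule sum.cong) (auto simp: fps_X_power_mult_nth)
qed

lemma fcnt_formula:
  assumes q: "0 < q" and m: "1 \<le> m"
  shows "int (fcnt q m A) = (\<Sum>i\<le>m. (-1)^i * int (m choose i) * (if q * i \<le> A then int ((A - q * i + (m - 1)) choose (m - 1)) else 0))"
proof -
  have sm: "Suc (m - 1) = m" using m by simp
  have "gq q ^ m = gq q ^ m * (HH (m - 1) * LL ^ m)" using HL[of "m - 1"] unfolding sm by simp
  also have "\<dots> = (gq q * LL) ^ m * HH (m - 1)"
    unfolding power_mult_distrib by (simp only: mult.assoc mult.commute[of "LL ^ m" "HH (m - 1)"])
  also have "\<dots> = (1 - fps_X ^ q) ^ m * HH (m - 1)" using gL[OF q] by simp
  finally have "fps_nth (gq q ^ m) A = fps_nth ((1 - fps_X ^ q) ^ m * HH (m - 1)) A" by simp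
  then show ?thesis unfolding gpow[OF q] coeff_bin HH_nth .
qed

lemma card_le_sum: "card {u. u < Q \<and> wt_q q n u \<le> r} = (\<Sum>s\<le>r. fcnt q n s)" if "Q = q ^ n"
proof (induction r)
  case 0 then show ?case unfolding that fcnt_def by simp
next
  case (Suc r)
  have "{u. u < Q \<and> wt_q q n u \<le> Suc r} = {u. u < Q \<and> wt_q q n u \<le> r} \<union> {u. u < Q \<and> wt_q q n u = Suc r}"
    by auto
  then have "card {u. u < Q \<and> wt_q q n u \<le> Suc r} = card {u. u < Q \<and> wt_q q n u \<le> r} + card {u. u < Q \<and> wt_q q n u = Suc r}"
    by (simp add: card_Un_disjoint disjoint_iff)
  then show ?case using Suc unfolding that fcnt_def by simp
qed

lemma cum_formula:
  assumes q: "0 < q"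
  shows "int (card {u. u < q ^ n \<and> wt_q q n u \<le> r}) = (\<Sum>i\<le>n. (-1)^i * int (n choose i) * (if q * i \<le> r then int ((r - q * i + n) choose n) else 0))"
proof -
  have "gq q ^ n * HH 0 = gq q ^ n * HH 0 * (HH n * LL ^ Suc n)" using HL[of n] by simp
  also have "\<dots> = (gq q * LL) ^ n * (HH 0 * LL) * HH n"
    unfolding power_mult_distrib power_Suc by (simp only: mult_ac)
  also have "\<dots> = (1 - fps_X ^ q) ^ n * HH n" using gL[OF q] H0L by simp
  finally have e: "fps_nth (gq q ^ n * HH 0) r = fps_nth ((1 - fps_X ^ q) ^ n * HH n) r" by simp
  have "fps_nth (gq q ^ n * HH 0) r = (\<Sum>i=0..r. int (fcnt q n i))" unfolding fps_mult_nth
    by (rule sum.cong) (auto simp: HH_def gpow[OF q])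
  also have "\<dots> = int (card {u. u < q ^ n \<and> wt_q q n u \<le> r})"
    using card_le_sum[of "q ^ n" q n r] by (simp add: atLeast0AtMost)
  finally show ?thesis using e unfolding coeff_bin HH_nth by simp
qed


definition rot :: "nat \<Rightarrow> nat \<Rightarrow> nat \<Rightarrow> nat" where
  "rot q n u = (u mod q ^ (n - 1)) * q + u div q ^ (n - 1)"

lemma mod_div_digit:
  fixes a b c q :: nat
  assumes "i < k" "0 < q"
  shows "(a mod q ^ k) div q ^ i mod q = a div q ^ i mod q"
proof -
  have qk: "q ^ k = q ^ i * q ^ (k - i)" using assms by (simp add: power_add[symmetric])
  have "a mod q ^ k = q ^ i * (a div q ^ i mod q ^ (k - i)) + a mod q ^ i"
    unfolding qk by (rule mod_mult2_eq)
  then have "(a mod q ^ k) div q ^ i = a div q ^ i mod q ^ (k - i)" using assms by simp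
  moreover have "q dvd q ^ (k - i)" using assms by simp
  ultimately show ?thesis by (simp add: mod_mod_cancel)
qed

lemma rot_facts:
  assumes q: "0 < q" and n: "1 \<le> n" and u: "u < q ^ n"
  shows "rot q n u mod q = u div q ^ (n - 1)" "rot q n u div q = u mod q ^ (n - 1)"
    and "u div q ^ (n - 1) < q"
proof -
  have qn: "q ^ n = q ^ (n - 1) * q" using n by (metis Suc_diff_le diff_Suc_1 mult.commute power_Suc)
  show lt: "u div q ^ (n - 1) < q" using u q qn by (simp add: div_less_iff_less_mult mult.commute)
  show "rot q n u mod q = u div q ^ (n - 1)" unfolding rot_def using lt by simp
  show "rot q n u div q = u mod q ^ (n - 1)" unfolding rot_def using lt q by simp
qed

lemma rot_digit:
  assumes q: "0 < q" and n: "1 \<le> n" and u: "u < q ^ n" and i: "i < n"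
  shows "digit q (rot q n u) ((i + 1) mod n) = digit q u i"
proof (cases "i + 1 < n")
  case True
  have "digit q (rot q n u) ((i + 1) mod n) = digit q (rot q n u) (Suc i)" using True by simp
  also have "\<dots> = digit q (u mod q ^ (n - 1)) i" unfolding digit_Suc rot_facts[OF q n u] ..
  also have "\<dots> = digit q u i" unfolding digit_def using True q by (intro mod_div_digit) auto
  finally show ?thesis .
next
  case False
  then have i': "i = n - 1" using i by simp
  have "digit q (rot q n u) ((i + 1) mod n) = rot q n u mod q" using i' n by (simp add: digit_0)
  also have "\<dots> = u div q ^ (n - 1)" by (rule rot_facts(1)[OF q n u])
  also have "\<dots> = digit q u i" unfolding digit_def i' using rot_facts(3)[OF q n u] by simp
  finally show ?thesis .
qed

lemma rot_digit':
  assumes q: "0 < q" and n: "1 \<le> n" and u: "u < q ^ n" and i: "i < n"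
  shows "digit q (rot q n u) (Suc i mod n) = digit q u i"
  using rot_digit[OF assms] by simp

lemma bij_succ_mod: fixes n :: nat assumes n: "1 \<le> n" shows "bij_betw (\<lambda>i. (i + 1) mod n) {..<n} {..<n}"
proof (rule bij_betwI[where g = "\<lambda>j. (j + n - 1) mod n"])
  show "(\<lambda>i. (i + 1) mod n) \<in> {..<n} \<rightarrow> {..<n}" using n by auto
  show "(\<lambda>j. (j + n - 1) mod n) \<in> {..<n} \<rightarrow> {..<n}" using n by auto
  fix x assume x: "x \<in> {..<n}"
  show "((x + 1) mod n + n - 1) mod n = x"
  proof (cases "x + 1 < n")
    case True then show ?thesis using x by simp
  next
    case False then have "x + 1 = n" using x by simp
    then show ?thesis using x by simp
  qed
next
  fix y assume y: "y \<in> {..<n}"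
  show "((y + n - 1) mod n + 1) mod n = y"
  proof (cases "y = 0")
    case True then show ?thesis using n by simp
  next
    case False
    then have "(y + n - 1) mod n = y - 1" using y
      by (metis Nat.add_diff_assoc2 One_nat_def Suc_leI add.commute add_diff_cancel_left' lessThan_iff mod_add_self1 mod_less neq0_conv le_add_diff_inverse diff_less less_imp_diff_less zero_less_one)
    then show ?thesis using y False by simp
  qed
qed

lemma sum_rot:
  assumes q: "0 < q" and n: "1 \<le> n" and u: "u < q ^ n"
  shows "(\<Sum>j<n. \<phi> j (digit q (rot q n u) j)) = (\<Sum>i<n. \<phi> ((i + 1) mod n) (digit q u i))"
proof -
  have "(\<Sum>j<n. \<phi> j (digit q (rot q n u) j)) = (\<Sum>i<n. \<phi> ((i + 1) mod n) (digit q (rot q n u) ((i + 1) mod n)))"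
    using sum.reindex_bij_betw[OF bij_succ_mod[OF n], of "\<lambda>j. \<phi> j (digit q (rot q n u) j)"] by simp
  also have "\<dots> = (\<Sum>i<n. \<phi> ((i + 1) mod n) (digit q u i))"
    by (rule sum.cong) (simp_all add: rot_digit'[OF q n u])
  finally show ?thesis .
qed

lemma rot_wt:
  assumes q: "0 < q" and n: "1 \<le> n" and u: "u < q ^ n"
  shows "wt_q q n (rot q n u) = wt_q q n u"
  unfolding wt_q_def using sum_rot[OF q n u, of "\<lambda>j d. d"] by simp

lemma odd_succ_mod: assumes "even n" "i < n" shows "odd (Suc i mod n) \<longleftrightarrow> even i"
proof (cases "i + 1 < n")
  case True
  then have "Suc i mod n = Suc i" by simp
  then show ?thesis by simp
next
  case False then have "i + 1 = n" using assms by simp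
  then show ?thesis using assms by auto
qed

lemma rot_O:
  assumes q: "0 < q" and n: "1 \<le> n" and u: "u < q ^ n" and ev: "even n"
  shows "O_q q n (rot q n u) = E_q q n u"
  unfolding O_alt E_alt sum_rot[OF q n u, of "\<lambda>j d. if odd j then d else 0"]
  proof (rule sum.cong[OF refl])
    fix x assume "x \<in> {..<n}"
    then have "odd (Suc x mod n) \<longleftrightarrow> even x" using odd_succ_mod[OF ev] by simp
    then show "(if odd ((x + 1) mod n) then digit q u x else 0) = (if even x then digit q u x else 0)" by auto
  qed

lemma rot_E:
  assumes q: "0 < q" and n: "1 \<le> n" and u: "u < q ^ n" and ev: "even n"
  shows "E_q q n (rot q n u) = O_q q n u"
  unfolding O_alt E_alt sum_rot[OF q n u, of "\<lambda>j d. if even j then d else 0"]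
  proof (rule sum.cong[OF refl])
    fix x assume "x \<in> {..<n}"
    then have "odd (Suc x mod n) \<longleftrightarrow> even x" using odd_succ_mod[OF ev] by simp
    then show "(if even ((x + 1) mod n) then digit q u x else 0) = (if odd x then digit q u x else 0)" by auto
  qed

lemma rot_lt:
  assumes q: "0 < q" and n: "1 \<le> n" and u: "u < q ^ n"
  shows "rot q n u < q ^ n"
proof -
  have qn: "q ^ n = q ^ (n - 1) * q" using n by (metis Suc_diff_le diff_Suc_1 mult.commute power_Suc)
  have a: "u mod q ^ (n - 1) + 1 \<le> q ^ (n - 1)" using q by (simp add: Suc_le_eq)
  have b: "u div q ^ (n - 1) < q" by (rule rot_facts(3)[OF q n u])
  have "rot q n u < (u mod q ^ (n - 1)) * q + q" unfolding rot_def using b by simp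
  also have "\<dots> = (u mod q ^ (n - 1) + 1) * q" by simp
  also have "\<dots> \<le> q ^ (n - 1) * q" using a by (intro mult_right_mono) auto
  finally show ?thesis using qn by simp
qed

lemma rot_pos:
  assumes "0 < u" "0 < q" shows "0 < rot q n u"
proof (rule ccontr)
  assume "\<not> 0 < rot q n u"
  then have "u mod q ^ (n - 1) * q = 0" "u div q ^ (n - 1) = 0" unfolding rot_def by auto
  then have "u mod q ^ (n - 1) = 0 \<or> q = 0" by simp
  then have "u mod q ^ (n - 1) = 0" using assms by simp
  moreover have "u = u div q ^ (n - 1) * q ^ (n - 1) + u mod q ^ (n - 1)" by (rule div_mult_mod_eq[symmetric])
  ultimately show False using assms \<open>u div q ^ (n - 1) = 0\<close> by simp
qed

lemma rot_pow:
  fixes \<alpha> :: "'a::field"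
  assumes q: "0 < q" and n: "1 \<le> n" and fr: "\<alpha> ^ (q ^ n) = \<alpha>"
  shows "\<alpha> ^ rot q n u = (\<alpha> ^ u) ^ q"
proof -
  define P where "P = q ^ (n - 1)"
  have qn: "P * q = q ^ n" unfolding P_def using n by (metis Suc_diff_le diff_Suc_1 mult.commute power_Suc)
  have "u * q = (u mod P) * q + (u div P) * (P * q)" by (metis div_mult_mod_eq add.commute mult.assoc distrib_right)
  then have "(\<alpha> ^ u) ^ q = \<alpha> ^ ((u mod P) * q) * (\<alpha> ^ (q ^ n)) ^ (u div P)"
    by (simp add: power_mult[symmetric] power_add qn mult.commute)
  also have "\<dots> = \<alpha> ^ rot q n u" unfolding fr rot_def P_def by (simp add: power_add)
  finally show ?thesis by simp
qed


lemma binomZ_nat: "binomZ (int x + int k) (int x) = int ((x + k) choose k)"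
proof -
  have "binomZ (int x + int k) (int x) = \<lfloor>(real (x + k)) gchoose x\<rfloor>"
    unfolding binomZ_def by simp
  also have "(real (x + k)) gchoose x = real ((x + k) choose x)" by (simp add: binomial_gbinomial)
  also have "(x + k) choose x = (x + k) choose k" using binomial_symmetric[of x "x + k"] by simp
  finally show ?thesis by simp
qed

lemma binomZ_neg: "b < 0 \<Longrightarrow> binomZ a b = 0" unfolding binomZ_def by simp

lemma Sm_neg: "A < 0 \<Longrightarrow> Sm q m A = 0"
proof -
  assume A: "A < 0"
  have "binomZ (A - int x * int q + int m - 1) (A - int x * int q) = 0" for x
  proof (rule binomZ_neg)
    have "0 \<le> int x * int q" by simp
    then show "A - int x * int q < 0" using A by linarith
  qed
  then show ?thesis unfolding Sm_def by simp
qed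

lemma Sm_nat:
  assumes q: "0 < q" and m: "1 \<le> m"
  shows "Sm q m (int a) = int (fcnt q m a)"
  unfolding fcnt_formula[OF q m] Sm_def
proof (rule sum.cong[OF refl])
  fix i assume "i \<in> {..m}"
  show "(-1) ^ i * int (m choose i) * binomZ (int a - int i * int q + int m - 1) (int a - int i * int q) =
        (-1) ^ i * int (m choose i) * (if q * i \<le> a then int ((a - q * i + (m - 1)) choose (m - 1)) else 0)"
  proof (cases "q * i \<le> a")
    case True
    have e1: "int a - int i * int q = int (a - q * i)" using True by (simp add: of_nat_diff mult.commute)
    have e2: "int (a - q * i) + int m - 1 = int (a - q * i) + int (m - 1)" using m by simp
    show ?thesis unfolding e1 e2 binomZ_nat using True by simp
  next
    case False
    then have "a < i * q" by (simp add: mult.commute)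
    then have "int a < int i * int q" by (metis of_nat_less_iff of_nat_mult)
    then have "int a - int i * int q < 0" by simp
    then show ?thesis using False by (simp add: binomZ_neg)
  qed
qed

lemma first_sum:
  assumes q: "0 < q"
  shows "(\<Sum>i\<le>n. (-1) ^ i * int (n choose i) * binomZ (int n + int r - int i * int q) (int r - int i * int q))
       = int (card {u. u < q ^ n \<and> wt_q q n u \<le> r})"
  unfolding cum_formula[OF q]
proof (rule sum.cong[OF refl])
  fix i assume "i \<in> {..n}"
  show "(-1) ^ i * int (n choose i) * binomZ (int n + int r - int i * int q) (int r - int i * int q) =
        (-1) ^ i * int (n choose i) * (if q * i \<le> r then int ((r - q * i + n) choose n) else 0)"
  proof (cases "q * i \<le> r")
    case True
    have e1: "int r - int i * int q = int (r - q * i)" using True by (simp add: of_nat_diff mult.commute)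
    have e2: "int n + int r - int i * int q = int (r - q * i) + int n" using True by (simp add: of_nat_diff mult.commute)
    show ?thesis unfolding e2 e1 binomZ_nat using True by simp
  next
    case False
    then have "r < i * q" by (simp add: mult.commute)
    then have "int r < int i * int q" by (metis of_nat_less_iff of_nat_mult)
    then have "int r - int i * int q < 0" by simp
    then show ?thesis using False by (simp add: binomZ_neg)
  qed
qed

lemma wt_zero: "wt_q q n 0 = 0" unfolding wt_q_def digit_def by simp

lemma card_ge_le:
  assumes q: "0 < q" and W: "W + r = n * (q - 1)"
  shows "card {u. u < q ^ n \<and> W \<le> wt_q q n u} = card {u. u < q ^ n \<and> wt_q q n u \<le> r}"
proof -
  define c where "c u = q ^ n - 1 - u" for u
  have inj: "inj_on c {u. u < q ^ n \<and> W \<le> wt_q q n u}" unfolding c_def by (rule inj_onI) auto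
  have "c ` {u. u < q ^ n \<and> W \<le> wt_q q n u} = {u. u < q ^ n \<and> wt_q q n u \<le> r}"
  proof
    show "c ` {u. u < q ^ n \<and> W \<le> wt_q q n u} \<subseteq> {u. u < q ^ n \<and> wt_q q n u \<le> r}"
    proof
      fix v assume "v \<in> c ` {u. u < q ^ n \<and> W \<le> wt_q q n u}"
      then obtain u where u: "u < q ^ n" "W \<le> wt_q q n u" and v: "v = c u" by auto
      have "wt_q q n v = n * (q - 1) - wt_q q n u" unfolding v c_def by (rule wt_compl[OF q u(1)])
      then show "v \<in> {u. u < q ^ n \<and> wt_q q n u \<le> r}" using u W q unfolding v c_def by auto
    qed
    show "{u. u < q ^ n \<and> wt_q q n u \<le> r} \<subseteq> c ` {u. u < q ^ n \<and> W \<le> wt_q q n u}"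
    proof
      fix v assume v: "v \<in> {u. u < q ^ n \<and> wt_q q n u \<le> r}"
      then have cv: "c v < q ^ n" "c (c v) = v" unfolding c_def by auto
      have "wt_q q n (c v) = n * (q - 1) - wt_q q n v" unfolding c_def by (rule wt_compl[OF q]) (use v in auto)
      then have "W \<le> wt_q q n (c v)" using v W by auto
      then show "v \<in> c ` {u. u < q ^ n \<and> W \<le> wt_q q n u}" using cv by (metis (mono_tags, lifting) image_eqI mem_Collect_eq)
    qed
  qed
  then show ?thesis using card_image[OF inj] by simp
qed

locale ffa = ffs +
  fixes \<alpha> :: 'a
  assumes prim: "primitive_elem \<alpha>" and n2: "2 \<le> n"
begin

lemma alpha_nz: "\<alpha> \<noteq> 0"
proof
  assume a0: "\<alpha> = 0"
  have "UNIV \<subseteq> {0::'a, 1}"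
  proof
    fix x :: 'a
    show "x \<in> {0, 1}"
    proof (cases "x = 0")
      case False
      then obtain u where "x = \<alpha> ^ u" using prim unfolding primitive_elem_def by blast
      then show ?thesis using a0 by (cases u) auto
    qed simp
  qed
  then have "card (UNIV :: 'a set) \<le> 2" using card_mono[of "{0::'a,1}" UNIV] by (simp add: card_insert_le)
  moreover have "q ^ 2 \<le> q ^ n" using q2 n2 by (intro power_increasing) auto
  moreover have "2 * 2 \<le> q ^ 2" using mult_le_mono[OF q2 q2] by (simp add: power2_eq_square)
  ultimately show False using cardF by simp
qed

end


context ffa begin

lemma alpha_N: "\<alpha> ^ NN = 1"
proof -
  have "\<alpha> ^ card (UNIV - {0::'a}) = 1"
    by (rule mult_group_pow) (use alpha_nz in auto)
  then show ?thesis using card_nonzero by simp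
qed

lemma alpha_frob: "\<alpha> ^ (q ^ n) = \<alpha>" by (rule F_frob)

lemma alpha_mod: "\<alpha> ^ u = \<alpha> ^ (u mod NN)"
proof -
  have "\<alpha> ^ u = \<alpha> ^ (NN * (u div NN) + u mod NN)" by (metis div_mult_mod_eq mult.commute)
  also have "\<dots> = (\<alpha> ^ NN) ^ (u div NN) * \<alpha> ^ (u mod NN)" by (simp only: power_add power_mult)
  finally show ?thesis using alpha_N by simp
qed

lemma img_lt: "(\<lambda>u. \<alpha> ^ u) ` {..<NN} = UNIV - {0}"
proof
  show "(\<lambda>u. \<alpha> ^ u) ` {..<NN} \<subseteq> UNIV - {0}" using alpha_nz by auto
  show "UNIV - {0} \<subseteq> (\<lambda>u. \<alpha> ^ u) ` {..<NN}"
  proof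
    fix x :: 'a assume "x \<in> UNIV - {0}"
    then obtain u where "x = \<alpha> ^ u" using prim unfolding primitive_elem_def by blast
    then have "x = \<alpha> ^ (u mod NN)" using alpha_mod by simp
    moreover have "u mod NN < NN" using NN_pos by simp
    ultimately show "x \<in> (\<lambda>u. \<alpha> ^ u) ` {..<NN}" by blast
  qed
qed

lemma img_1N: "(\<lambda>u. \<alpha> ^ u) ` {1..NN} = UNIV - {0}"
proof -
  have "(\<lambda>u. \<alpha> ^ u) ` {1..NN} = (\<lambda>u. \<alpha> ^ u) ` {..<NN}"
  proof
    show "(\<lambda>u. \<alpha> ^ u) ` {1..NN} \<subseteq> (\<lambda>u. \<alpha> ^ u) ` {..<NN}"
    proof
      fix x assume "x \<in> (\<lambda>u. \<alpha> ^ u) ` {1..NN}"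
      then obtain u where u: "u \<in> {1..NN}" "x = \<alpha> ^ u" by blast
      show "x \<in> (\<lambda>u. \<alpha> ^ u) ` {..<NN}"
      proof (cases "u = NN")
        case True
        then have "x = \<alpha> ^ 0" using u alpha_N by simp
        then show ?thesis using NN_pos by (metis image_eqI lessThan_iff neq0_conv not_one_le_zero)
      next
        case False then show ?thesis using u by auto
      qed
    qed
    show "(\<lambda>u. \<alpha> ^ u) ` {..<NN} \<subseteq> (\<lambda>u. \<alpha> ^ u) ` {1..NN}"
    proof
      fix x assume "x \<in> (\<lambda>u. \<alpha> ^ u) ` {..<NN}"
      then obtain u where u: "u < NN" "x = \<alpha> ^ u" by blast
      show "x \<in> (\<lambda>u. \<alpha> ^ u) ` {1..NN}"
      proof (cases "u = 0")
        case True
        then have "x = \<alpha> ^ NN" using u alpha_N by simp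
        then show ?thesis using NN_pos by auto
      next
        case False then show ?thesis using u by auto
      qed
    qed
  qed
  then show ?thesis using img_lt by simp
qed

lemma inj_alpha: "inj_on (\<lambda>u. \<alpha> ^ u) {1..NN}"
proof (rule eq_card_imp_inj_on)
  show "finite {1..NN}" by simp
  show "card ((\<lambda>u. \<alpha> ^ u) ` {1..NN}) = card {1..NN}" unfolding img_1N card_nonzero by simp
qed

end

locale sett = ffa +
  fixes m r :: nat and I :: "nat set"
  assumes nm: "n = 2 * m" and rlt: "r < n * (q - 1)" and IM: "I \<subseteq> M_set q m r"
begin

definition W where "W = n * (q - 1) - r"
definition U0 where "U0 = {u. 0 < u \<and> u \<le> NN \<and> wt_q q n u < W}"
definition T where "T k = {u. u \<le> NN \<and> wt_q q n u = W \<and> \<bar>int (O_q q n u) - int (E_q q n u)\<bar> = int k}" for k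
definition Ib where "Ib = M_set q m r - I"
definition S where "S = U0 \<union> (\<Union>k\<in>Ib. T k)"

lemma q0: "0 < q" using q2 by simp
lemma m1: "1 \<le> m" using n2 nm by simp
lemma W1: "1 \<le> W" using rlt unfolding W_def by simp
lemma intW: "int n * (int q - 1) - int r = int W"
  using rlt q2 unfolding W_def by (simp add: of_nat_diff)
lemma NN_lt: "u \<le> NN \<longleftrightarrow> u < q ^ n"
  unfolding NN_def using q2 by (metis One_nat_def Suc_pred le_simps(2) less_Suc_eq_le zero_less_power q0)

lemma finite_Ib: "finite Ib"
  unfolding Ib_def M_set_def by (rule finite_subset[of _ "{..m * (q - 1)}"]) auto

lemma Z_eq: "Z_rI q m n \<alpha> r I = (\<lambda>u. \<alpha> ^ u) ` S"
proof -
  have "Z_set q n \<alpha> r = (\<lambda>u. \<alpha> ^ u) ` U0"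
    unfolding Z_set_def U0_def NN_def intW by auto
  moreover have "Theta q n \<alpha> r k = (\<lambda>u. \<alpha> ^ u) ` T k" for k
    unfolding Theta_def T_def NN_def intW by auto
  ultimately show ?thesis unfolding Z_rI_def S_def Ib_def by (simp add: image_Un image_UN)
qed

lemma S_sub: "S \<subseteq> {1..NN}"
proof
  fix u assume "u \<in> S"
  then show "u \<in> {1..NN}" unfolding S_def U0_def T_def using W1 wt_zero[of q n]
    by (auto simp: Suc_le_eq intro!: Nat.gr0I)
qed

lemma card_Z: "card (Z_rI q m n \<alpha> r I) = card U0 + (\<Sum>k\<in>Ib. card (T k))"
proof -
  have "card (Z_rI q m n \<alpha> r I) = card S"
    unfolding Z_eq by (rule card_image[OF inj_on_subset[OF inj_alpha S_sub]])
  also have "\<dots> = card U0 + card (\<Union>k\<in>Ib. T k)"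
    unfolding S_def
  proof (rule card_Un_disjoint)
    show "finite U0" unfolding U0_def by simp
    show "finite (\<Union>k\<in>Ib. T k)" using finite_Ib unfolding T_def by auto
    show "U0 \<inter> (\<Union>k\<in>Ib. T k) = {}" unfolding U0_def T_def by auto
  qed
  also have "card (\<Union>k\<in>Ib. T k) = (\<Sum>k\<in>Ib. card (T k))"
    by (rule card_UN_disjoint[OF finite_Ib]) (auto simp: T_def)
  finally show ?thesis .
qed

lemma closed_Z: "closed (Z_rI q m n \<alpha> r I)"
  unfolding closed_def Z_eq
proof
  fix \<beta> assume "\<beta> \<in> (\<lambda>u. \<alpha> ^ u) ` S"
  then obtain u where u: "u \<in> S" and b: "\<beta> = \<alpha> ^ u" by blast
  have ul: "u < q ^ n" using S_sub u NN_lt by auto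
  have ev: "even n" using nm by simp
  define v where "v = rot q n u"
  have bv: "\<beta> ^ q = \<alpha> ^ v" unfolding b v_def using rot_pow[OF q0 n1 alpha_frob] by simp
  have wt: "wt_q q n v = wt_q q n u" unfolding v_def by (rule rot_wt[OF q0 n1 ul])
  have OE: "O_q q n v = E_q q n u" "E_q q n v = O_q q n u"
    unfolding v_def by (rule rot_O[OF q0 n1 ul ev], rule rot_E[OF q0 n1 ul ev])
  have vl: "v \<le> NN" unfolding v_def NN_lt by (rule rot_lt[OF q0 n1 ul])
  have vp: "0 < v" if "0 < u" unfolding v_def by (rule rot_pos[OF that q0])
  have "v \<in> S"
  proof (cases "u \<in> U0")
    case True
    then show ?thesis unfolding S_def U0_def using wt vl vp by auto
  next
    case False
    then obtain k where k: "k \<in> Ib" "u \<in> T k" using u unfolding S_def by auto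
    have "v \<in> T k" using k(2) wt OE vl unfolding T_def by (simp add: abs_minus_commute)
    then show ?thesis unfolding S_def using k(1) by auto
  qed
  then show "\<beta> ^ q \<in> (\<lambda>u. \<alpha> ^ u) ` S" using bv by blast
qed

lemma zero_notin: "0 \<notin> Z_rI q m n \<alpha> r I"
  unfolding Z_eq using alpha_nz by auto

end


context ffs begin

lemma DD_smul: "DD (\<lambda>i. k * c i) \<beta> = k * DD c \<beta>"
  unfolding DD_def by (simp add: sum_distrib_left mult.assoc)

lemma ext_code:
  assumes cl: "closed Z" and z0: "0 \<notin> Z"
  shows "code_dim K (extend_code NN (CC Z)) = NN - card Z"
proof (rule code_dim_eq)
  define ext where "ext c = c(NN := - (\<Sum>i<NN. c i))" for c :: "nat \<Rightarrow> 'a"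
  have E: "extend_code NN (CC Z) = ext ` CC Z" unfolding extend_code_def ext_def ..
  have CCadd: "(\<lambda>i. c i + c' i) \<in> CC Z" if "c \<in> CC Z" "c' \<in> CC Z" for c c'
  proof -
    have "(\<lambda>i. c i + c' i) \<in> words K NN" using that CC_words words_add by blast
    moreover have "DD (\<lambda>i. c i + c' i) \<beta> = 0" if "\<beta> \<in> Z" for \<beta>
      using that \<open>c \<in> CC Z\<close> \<open>c' \<in> CC Z\<close> unfolding DD_add unfolding CC_def cyclic_code_def DD_def by auto
    ultimately show ?thesis unfolding CC_def cyclic_code_def DD_def by auto
  qed
  have CCsmul: "(\<lambda>i. k * c i) \<in> CC Z" if "k \<in> K" "c \<in> CC Z" for k c
  proof -
    have "c \<in> words K NN" using that(2) CC_words by blast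
    then have "(\<lambda>i. k * c i) \<in> words K NN" using that(1) Kmult unfolding words_def by auto
    moreover have "DD (\<lambda>i. k * c i) \<beta> = 0" if "\<beta> \<in> Z" for \<beta>
      using that \<open>c \<in> CC Z\<close> unfolding DD_smul unfolding CC_def cyclic_code_def DD_def by auto
    ultimately show ?thesis unfolding CC_def cyclic_code_def DD_def by auto
  qed
  show "(\<lambda>x. a x + b x) \<in> extend_code NN (CC Z)" if hab: "a \<in> extend_code NN (CC Z)" "b \<in> extend_code NN (CC Z)" for a b
  proof -
    obtain c c' where c: "c \<in> CC Z" "c' \<in> CC Z" and ab: "a = ext c" "b = ext c'" using hab unfolding E by blast
    have "(\<lambda>x. a x + b x) = ext (\<lambda>i. c i + c' i)"
      unfolding ab ext_def by (auto simp: fun_eq_iff sum.distrib)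
    then show ?thesis unfolding E using CCadd[OF c] by blast
  qed
  show "(\<lambda>x. k * a x) \<in> extend_code NN (CC Z)" if hka: "k \<in> K" "a \<in> extend_code NN (CC Z)" for k a
  proof -
    obtain c where c: "c \<in> CC Z" and ab: "a = ext c" using hka(2) unfolding E by blast
    have "(\<lambda>x. k * a x) = ext (\<lambda>i. k * c i)"
      unfolding ab ext_def by (auto simp: fun_eq_iff sum_distrib_left)
    then show ?thesis unfolding E using CCsmul[OF hka(1) c] by blast
  qed
  have inj: "inj_on ext (CC Z)"
  proof (rule inj_onI)
    fix c c' assume c: "c \<in> CC Z" and c': "c' \<in> CC Z" and e: "ext c = ext c'"
    show "c = c'"
    proof
      fix i show "c i = c' i"
      proof (cases "i = NN")
        case True
        have "c \<in> words K NN" "c' \<in> words K NN" using c c' CC_words by blast+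
        then show ?thesis using True unfolding words_def by auto
      next
        case False
        then show ?thesis using fun_cong[OF e, of i] unfolding ext_def by simp
      qed
    qed
  qed
  show "card (extend_code NN (CC Z)) = q ^ (NN - card Z)"
    unfolding E card_image[OF inj] by (rule code_card[OF cl z0])
qed

end

context sett begin

lemma card_U0: "card U0 + card {u. u < q ^ n \<and> wt_q q n u \<le> r} = NN"
proof -
  define U1 where "U1 = {u. u < q ^ n \<and> W \<le> wt_q q n u}"
  have eq: "{1..NN} = U0 \<union> U1"
  proof (intro set_eqI iffI)
    fix u assume u: "u \<in> {1..NN}"
    then have "u < q ^ n" "0 < u" "u \<le> NN" using NN_lt by auto
    then show "u \<in> U0 \<union> U1" unfolding U0_def U1_def by (cases "wt_q q n u < W") auto
  next
    fix u assume u: "u \<in> U0 \<union> U1"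
    show "u \<in> {1..NN}"
    proof (cases "u \<in> U0")
      case True then show ?thesis unfolding U0_def by auto
    next
      case False
      then have u1: "u < q ^ n" "W \<le> wt_q q n u" using u unfolding U1_def by auto
      have "u \<noteq> 0"
      proof
        assume "u = 0"
        then have "W \<le> wt_q q n 0" using u1(2) by simp
        then show False using W1 wt_zero[of q n] by simp
      qed
      then show ?thesis using u1(1) NN_lt by auto
    qed
  qed
  have "card {1..NN} = card U0 + card U1" unfolding eq
  proof (rule card_Un_disjoint)
    show "finite U0" unfolding U0_def by (rule finite_subset[of _ "{..NN}"]) auto
    show "finite U1" unfolding U1_def by (rule finite_subset[of _ "{..<q ^ n}"]) auto
    show "U0 \<inter> U1 = {}" unfolding U0_def U1_def by auto
  qed
  then have "card U0 + card U1 = NN" by simp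
  moreover have "card U1 = card {u. u < q ^ n \<and> wt_q q n u \<le> r}" unfolding U1_def
    by (rule card_ge_le[OF q0]) (use rlt in \<open>simp add: W_def\<close>)
  ultimately show ?thesis by simp
qed

lemma par: "k \<in> Ib \<Longrightarrow> even (W + k)"
proof -
  assume "k \<in> Ib"
  then have "even k \<longleftrightarrow> even r" unfolding Ib_def M_set_def by auto
  moreover have "even (n * (q - 1))" using nm by simp
  moreover have "W + r = n * (q - 1)" using rlt unfolding W_def by simp
  ultimately have "even (W + r)" "even k \<longleftrightarrow> even r" by simp_all
  then show ?thesis by simp
qed

lemma hm: "hcnt q n a b = fcnt q m a * fcnt q m b"
  using hcnt_eq[OF q0, of n a b] nm by simp

lemma T_alt: "T k = {u. u < q ^ n \<and> E_q q n u + O_q q n u = W \<and> \<bar>int (O_q q n u) - int (E_q q n u)\<bar> = int k}"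
  unfolding T_def NN_lt using wt_OE by (auto simp: add.commute)

lemma card_T_big: "W < k \<Longrightarrow> T k = {}"
  unfolding T_alt by auto

lemma card_T_pos:
  assumes k: "k \<in> Ib" "0 < k" "k \<le> W"
  shows "int (card (T k)) = 2 * Sm q m ((int W - int k) div 2) * Sm q m ((int W + int k) div 2)"
proof -
  have "\<exists>a. W = 2 * a + k" using par[OF k(1)] k(3) by presburger
  then obtain a where a: "W = 2 * a + k" by blast
  define b where "b = a + k"
  have T: "T k = {u. u < q ^ n \<and> E_q q n u = a \<and> O_q q n u = b} \<union> {u. u < q ^ n \<and> E_q q n u = b \<and> O_q q n u = a}"
    unfolding T_alt a b_def by auto
  have "card (T k) = hcnt q n a b + hcnt q n b a"
    unfolding T hcnt_def using k(2) unfolding b_def by (subst card_Un_disjoint) auto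
  then have "int (card (T k)) = 2 * int (fcnt q m a) * int (fcnt q m b)" unfolding hm by simp
  moreover have "(int W - int k) div 2 = int a" "(int W + int k) div 2 = int b" unfolding a b_def by simp_all
  ultimately show ?thesis using Sm_nat[OF q0 m1] by simp
qed

lemma card_T_zero:
  assumes k: "0 \<in> Ib"
  shows "int (card (T 0)) = (Sm q m (int W div 2)) ^ 2"
proof -
  have "\<exists>a. W = 2 * a" using par[OF k] by presburger
  then obtain a where a: "W = 2 * a" by blast
  have T: "T 0 = {u. u < q ^ n \<and> E_q q n u = a \<and> O_q q n u = a}"
    unfolding T_alt a by auto
  have "int (card (T 0)) = int (fcnt q m a) ^ 2" unfolding T hcnt_def[symmetric] hm by (simp add: power2_eq_square)
  moreover have "int W div 2 = int a" unfolding a by simp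
  ultimately show ?thesis using Sm_nat[OF q0 m1] by simp
qed

lemma card_T_nonzero:
  assumes k: "k \<in> Ib" "0 < k"
  shows "int (card (T k)) = 2 * Sm q m ((int W - int k) div 2) * Sm q m ((int W + int k) div 2)"
proof (cases "k \<le> W")
  case True then show ?thesis using card_T_pos k by simp
next
  case False
  then have "int W - int k < 0" by simp
  then have "(int W - int k) div 2 < 0" by simp
  then show ?thesis using card_T_big False Sm_neg by simp
qed

theorem main_formula:
  "int (code_dim K (C_code K q m n \<alpha> r I)) =
      (\<Sum>i\<le>n. (-1) ^ i * int (n choose i) *
         binomZ (int n + int r - int i * int q) (int r - int i * int q))
    - 2 * (\<Sum>k\<in>(M_set q m r - I) - {0}.
         Sm q m ((int n * (int q - 1) - int r - int k) div 2) *
         Sm q m ((int n * (int q - 1) - int r + int k) div 2))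
    - (if 0 \<in> M_set q m r - I then 1 else 0) *
         (Sm q m ((int n * (int q - 1) - int r) div 2)) ^ 2"
proof -
  let ?Z = "Z_rI q m n \<alpha> r I"
  define F where "F = (\<Sum>i\<le>n. (-1) ^ i * int (n choose i) *
         binomZ (int n + int r - int i * int q) (int r - int i * int q))"
  define X where "X = (\<Sum>k\<in>Ib - {0}. Sm q m ((int W - int k) div 2) * Sm q m ((int W + int k) div 2))"
  define Y where "Y = (if 0 \<in> Ib then 1 else 0) * (Sm q m (int W div 2)) ^ 2"
  have cd: "code_dim K (C_code K q m n \<alpha> r I) = NN - card ?Z"
    unfolding C_code_def NN_def[symmetric] CC_def[symmetric] by (rule ext_code[OF closed_Z zero_notin])
  have "?Z \<subseteq> UNIV - {0}" using zero_notin by auto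
  then have cZ: "card ?Z \<le> NN" using card_mono[of "UNIV - {0::'a}" ?Z] card_nonzero by simp
  have F: "F = int (card {u. u < q ^ n \<and> wt_q q n u \<le> r})" unfolding F_def by (rule first_sum[OF q0])
  have FN: "int NN = int (card U0) + F" unfolding F using card_U0 by (metis of_nat_add)
  have sumT: "(\<Sum>k\<in>Ib. int (card (T k))) = 2 * X + Y"
  proof -
    have s1: "(\<Sum>k\<in>Ib - {0}. int (card (T k))) = 2 * X"
      unfolding X_def sum_distrib_left
    proof (rule sum.cong[OF refl])
      fix k assume "k \<in> Ib - {0}"
      then show "int (card (T k)) = 2 * (Sm q m ((int W - int k) div 2) * Sm q m ((int W + int k) div 2))"
        using card_T_nonzero[of k] by (simp add: mult.assoc)
    qed
    show ?thesis
    proof (cases "0 \<in> Ib")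
      case True
      have "(\<Sum>k\<in>Ib. int (card (T k))) = int (card (T 0)) + (\<Sum>k\<in>Ib - {0}. int (card (T k)))"
        by (rule sum.remove[OF finite_Ib True])
      then show ?thesis using s1 card_T_zero[OF True] True unfolding Y_def by simp
    next
      case False
      then have "Ib - {0} = Ib" by auto
      then show ?thesis using s1 False unfolding Y_def by simp
    qed
  qed
  have cZi: "int (card ?Z) = int (card U0) + (\<Sum>k\<in>Ib. int (card (T k)))"
    unfolding card_Z by simp
  have "int (code_dim K (C_code K q m n \<alpha> r I)) = int NN - int (card ?Z)"
    unfolding cd using cZ by (simp add: of_nat_diff)
  also have "\<dots> = F - 2 * X - Y" unfolding cZi FN sumT by simp
  finally have res: "int (code_dim K (C_code K q m n \<alpha> r I)) = F - 2 * X - Y" .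
  have e1: "int n * (int q - 1) - int r - int k = int W - int k" for k using intW by simp
  have e2: "int n * (int q - 1) - int r + int k = int W + int k" for k using intW by simp
  show ?thesis unfolding e1 e2 intW using res unfolding F_def X_def Y_def Ib_def .
qed

end

theorem theorem3p9:
  fixes K :: "'a::{field,finite} set" and \<alpha> :: 'a
    and p l q m n r :: nat and I :: "nat set"
  assumes "prime p" and "0 < l" and "q = p ^ l"
    and "1 \<le> m" and "n = 2 * m"
    and "card (UNIV :: 'a set) = q ^ n"
    and "is_subfield K" and "card K = q"
    and "primitive_elem \<alpha>"
    and "r < n * (q - 1)"
    and "I \<subseteq> M_set q m r"
  shows "int (code_dim K (C_code K q m n \<alpha> r I)) =
      (\<Sum>i\<le>n. (-1) ^ i * int (n choose i) *
         binomZ (int n + int r - int i * int q) (int r - int i * int q))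
    - 2 * (\<Sum>k\<in>(M_set q m r - I) - {0}.
         Sm q m ((int n * (int q - 1) - int r - int k) div 2) *
         Sm q m ((int n * (int q - 1) - int r + int k) div 2))
    - (if 0 \<in> M_set q m r - I then 1 else 0) *
         (Sm q m ((int n * (int q - 1) - int r) div 2)) ^ 2"
proof -
  interpret sett K q n \<alpha> m r I
  proof (unfold_locales)
    show "is_subfield K" "card K = q" "card (UNIV :: 'a set) = q ^ n" "primitive_elem \<alpha>"
      "n = 2 * m" "r < n * (q - 1)" "I \<subseteq> M_set q m r" using assms by auto
    show "1 \<le> n" "2 \<le> n" using assms by auto
    show "\<exists>p l. prime p \<and> q = p ^ l" using assms by blast
  qed
  show ?thesis by (rule main_formula)
qed

end
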